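(* Let $q=e^{i\phi}\in\mathbb{C}$ ($\phi\in\mathbb{R}$) be not a root of unity, with fixed square root $q^{1/2}$. Let $\mathcal{A}=SL_q(2,\mathbb{R})$ be the Hopf $*$-algebra generated by self-adjoint $a,b,c,d$ with relations $ab=q\,ba$, $ac=q\,ca$, $bc=cb$, $bd=q\,db$, $cd=q\,dc$, $da-q^{-1}bc=1=ad-q\,bc$, matrix comultiplication on $\begin{pmatrix}a&b\\c&d\end{pmatrix}$, counit the identity matrix, and antipode $S(a)=d$, $S(b)=-q^{-1}b$, $S(c)=-qc$, $S(d)=a$; let $\tau=*\circ S$. For $\mu,\nu\in\mathbb{R}$ let $\mathcal{K}_{\mu\nu}=\mathcal{A}/\mathcal{C}_{\mu\nu}\mathcal{A}$, where $\mathcal{C}_{\mu\nu}=\mathrm{span}\{a-d+2q^{1/2}\mu b,\ q\nu b+c\}$, with induced coalgebra structure, right $\mathcal{A}$-module structure and induced map $\tau$. Then: (i) If $\mu^2>\nu$, $\mathcal{K}_{\mu\nu}$ is isomorphic as a coalgebra to $\mathcal{O}(\mathbb{R}_+)$. If $\nu>0$ and $\mu/\sqrt{\nu}=\cos\phi_{\mu\nu}<1$ for some real $\phi_{\mu\nu}$ with $\cos^2\phi_{\mu\nu}\neq\cos^2(\ell\phi)$ for all $\ell\in\mathbb{Z}$, then $\mathcal{K}_{\mu\nu}$ is isomorphic as a coalgebra to $\mathcal{O}(\mathbf{S}^1)$. The coalgebras $\mathcal{K}_{\mu\nu}$ with $\nu>0$, $\mu/\sqrt{\nu}=\cos\phi_{\mu\nu}$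 and $\cos^2\phi_{\mu\nu}=\cos^2(\ell\phi)$ for some $\ell\in\mathbb{Z}$ (the special series) are mutually isomorphic as coalgebras. (ii) Let $\nu>0$, $\mu/\sqrt{\nu}=\cos\phi_{\mu\nu}\leq1$, let $n\in\mathbb{Z}$ and let $\mu_n$ be defined by $\mu_n/\sqrt{\nu}=\cos(\phi_{\mu\nu}+n\phi)$. Then $\mathcal{K}_{\mu\nu}$ and $\mathcal{K}_{\mu_n\nu}$ are isomorphic both as coalgebras and as right $\mathcal{A}$-modules (by one and the same map).
   Context: $\mathcal{O}(\mathbb{R}_+)$ and $\mathcal{O}(\mathbf{S}^1)$ denote the coordinate coalgebras of the classical groups $\mathbb{R}_+$ and $\mathbf{S}^1$: both are the Laurent polynomial coalgebra $\mathbb{C}[t,t^{-1}]$ with basis of group-like elements $t^n$, $n\in\mathbb{Z}$ ($\Delta t^n=t^n\otimes t^n$, $\varepsilon(t^n)=1$), equipped with the real structure $\tau(t^n)=t^{-n}$ for $\mathbb{R}_+$ and $\tau(t^n)=t^n$ for $\mathbf{S}^1$. The right ideal $\mathcal{C}_{\mu\nu}\mathcal{A}$ is a $\tau$-invariant two-sided coideal, so the quotient inherits coalgebra and right module structures and $\tau$. *)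

theory Defs
  imports Complex_Main "HOL-Library.Function_Algebras"
begin

datatype gen = GA | GB | GC | GD

fun grow :: "gen \<Rightarrow> nat" where
  "grow GA = 1" | "grow GB = 1" | "grow GC = 2" | "grow GD = 2"
fun gcol :: "gen \<Rightarrow> nat" where
  "gcol GA = 1" | "gcol GB = 2" | "gcol GC = 1" | "gcol GD = 2"
definition gent :: "nat \<Rightarrow> nat \<Rightarrow> gen" where
  "gent i j = (if i = 1 then (if j = 1 then GA else GB) else (if j = 1 then GC else GD))"

text \<open>Elements of the free algebra: finitely supported functions on words.\<close>
type_synonym fa = "gen list \<Rightarrow> complex"

definition finsupp :: "('a \<Rightarrow> complex) set" where
  "finsupp = {f. finite {x. f x \<noteq> 0}}"

definition wmon :: "gen list \<Rightarrow> fa" where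
  "wmon w = (\<lambda>u. if u = w then 1 else 0)"

definition fsc :: "complex \<Rightarrow> ('a \<Rightarrow> complex) \<Rightarrow> ('a \<Rightarrow> complex)" where
  "fsc c f = (\<lambda>x. c * f x)"

definition fmul :: "fa \<Rightarrow> fa \<Rightarrow> fa" where
  "fmul f g = (\<lambda>w. \<Sum>k\<le>length w. f (take k w) * g (drop k w))"

definition fone :: fa where "fone = wmon []"
definition gA :: fa where "gA = wmon [GA]"
definition gB :: fa where "gB = wmon [GB]"
definition gC :: fa where "gC = wmon [GC]"
definition gD :: fa where "gD = wmon [GD]"

inductive_set lspan :: "('a \<Rightarrow> complex) set \<Rightarrow> ('a \<Rightarrow> complex) set" for S where
  lspan_zero: "0 \<in> lspan S"
| lspan_base: "x \<in> S \<Longrightarrow> x \<in> lspan S"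
| lspan_add: "x \<in> lspan S \<Longrightarrow> y \<in> lspan S \<Longrightarrow> x + y \<in> lspan S"
| lspan_scale: "x \<in> lspan S \<Longrightarrow> fsc c x \<in> lspan S"

definition slq_rels :: "complex \<Rightarrow> fa set" where
  "slq_rels q = {
     fmul gA gB - fsc q (fmul gB gA),
     fmul gA gC - fsc q (fmul gC gA),
     fmul gB gC - fmul gC gB,
     fmul gB gD - fsc q (fmul gD gB),
     fmul gC gD - fsc q (fmul gD gC),
     fmul gD gA - fsc (inverse q) (fmul gB gC) - fone,
     fmul gA gD - fsc q (fmul gB gC) - fone }"

text \<open>Generators of C_{mu nu}; s is the fixed square root of q.\<close>
definition Cgens :: "complex \<Rightarrow> complex \<Rightarrow> real \<Rightarrow> real \<Rightarrow> fa set" where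
  "Cgens q s \<mu> \<nu> = { gA - gD + fsc (2 * s * complex_of_real \<mu>) gB,
                       fsc (q * complex_of_real \<nu>) gB + gC }"

text \<open>Preimage in the free algebra of the right ideal C_{mu nu} A of A:
  the two-sided ideal of relations plus the right ideal generated by C_{mu nu}.
  Hence K_{mu nu} = (free algebra) / Jset.\<close>
definition Jset :: "complex \<Rightarrow> complex \<Rightarrow> real \<Rightarrow> real \<Rightarrow> fa set" where
  "Jset q s \<mu> \<nu> = lspan
     ({fmul (fmul x r) y | x r y. r \<in> slq_rels q \<and> x \<in> finsupp \<and> y \<in> finsupp}
      \<union> {fmul c y | c y. c \<in> Cgens q s \<mu> \<nu> \<and> y \<in> finsupp})"

text \<open>Matrix comultiplication, extended multiplicatively: the coefficient of the
  tensor u (x) v in Delta f.  For a word w = x_{i1 j1} ... x_{in jn},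
  Delta w = sum over k of (x_{i1 k1} ... x_{in kn}) (x) (x_{k1 j1} ... x_{kn jn}).\<close>
definition fcomult :: "fa \<Rightarrow> (gen list \<times> gen list \<Rightarrow> complex)" where
  "fcomult f = (\<lambda>(u, v). if length u = length v \<and> (\<forall>i<length u. gcol (u ! i) = grow (v ! i))
       then f (map2 (\<lambda>x y. gent (grow x) (gcol y)) u v) else 0)"

definition weps :: "gen list \<Rightarrow> complex" where
  "weps w = (if \<forall>x\<in>set w. x = GA \<or> x = GD then 1 else 0)"

definition feps :: "fa \<Rightarrow> complex" where
  "feps f = (\<Sum>w\<in>{w. f w \<noteq> 0}. f w * weps w)"

definition tens :: "('a \<Rightarrow> complex) \<Rightarrow> ('b \<Rightarrow> complex) \<Rightarrow> ('a \<times> 'b \<Rightarrow> complex)" where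
  "tens x y = (\<lambda>(u, v). x u * y v)"

text \<open>Kernel of the projection F (x) F -> K (x) K.\<close>
definition tsub :: "fa set \<Rightarrow> (gen list \<times> gen list \<Rightarrow> complex) set" where
  "tsub J = lspan ({tens x y | x y. x \<in> J \<and> y \<in> finsupp} \<union> {tens x y | x y. x \<in> finsupp \<and> y \<in> J})"

text \<open>phi (x) psi applied to a finitely supported element of F (x) F.\<close>
definition tmap :: "(fa \<Rightarrow> 'b \<Rightarrow> complex) \<Rightarrow> (fa \<Rightarrow> 'b \<Rightarrow> complex)
     \<Rightarrow> (gen list \<times> gen list \<Rightarrow> complex) \<Rightarrow> ('b \<times> 'b \<Rightarrow> complex)" where
  "tmap \<phi> \<psi> h = (\<lambda>(m, n). \<Sum>p\<in>{p. h p \<noteq> 0}. h p * \<phi> (wmon (fst p)) m * \<psi> (wmon (snd p)) n)"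

definition flinear :: "(('a \<Rightarrow> complex) \<Rightarrow> ('b \<Rightarrow> complex)) \<Rightarrow> bool" where
  "flinear \<phi> \<longleftrightarrow> (\<forall>f\<in>finsupp. \<forall>g\<in>finsupp. \<phi> (f + g) = \<phi> f + \<phi> g)
                 \<and> (\<forall>c. \<forall>f\<in>finsupp. \<phi> (fsc c f) = fsc c (\<phi> f))"

section \<open>The Laurent coalgebra C[t,t^-1] = O(R_+) = O(S^1) (as coalgebras)\<close>

definition lcomult :: "(int \<Rightarrow> complex) \<Rightarrow> (int \<times> int \<Rightarrow> complex)" where
  "lcomult g = (\<lambda>(m, n). if m = n then g n else 0)"

definition leps :: "(int \<Rightarrow> complex) \<Rightarrow> complex" where
  "leps g = (\<Sum>n\<in>{n. g n \<noteq> 0}. g n)"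

text \<open>F/J is isomorphic as a coalgebra to the Laurent coalgebra: a linear map
  phi on F with kernel exactly J, surjective, compatible with comultiplication and counit.\<close>
definition coalg_iso_laurent :: "fa set \<Rightarrow> bool" where
  "coalg_iso_laurent J \<longleftrightarrow> (\<exists>\<phi> :: fa \<Rightarrow> int \<Rightarrow> complex.
      flinear \<phi> \<and> \<phi> ` finsupp \<subseteq> finsupp \<and> finsupp \<subseteq> \<phi> ` finsupp
    \<and> (\<forall>f\<in>finsupp. \<phi> f = 0 \<longleftrightarrow> f \<in> J)
    \<and> (\<forall>f\<in>finsupp. tmap \<phi> \<phi> (fcomult f) = lcomult (\<phi> f) \<and> leps (\<phi> f) = feps f))"

text \<open>phi : F -> F induces a coalgebra isomorphism F/J -> F/J'.\<close>
definition coalg_iso_map :: "fa set \<Rightarrow> fa set \<Rightarrow> (fa \<Rightarrow> fa) \<Rightarrow> bool" where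
  "coalg_iso_map J J' \<phi> \<longleftrightarrow>
      flinear \<phi> \<and> \<phi> ` finsupp \<subseteq> finsupp
    \<and> (\<forall>f\<in>finsupp. \<phi> f \<in> J' \<longleftrightarrow> f \<in> J)
    \<and> (\<forall>g\<in>finsupp. \<exists>f\<in>finsupp. g - \<phi> f \<in> J')
    \<and> (\<forall>f\<in>finsupp. tmap \<phi> \<phi> (fcomult f) - fcomult (\<phi> f) \<in> tsub J' \<and> feps (\<phi> f) = feps f)"

text \<open>The induced map F/J -> F/J' is a right module map over A.\<close>
definition rmod_map :: "fa set \<Rightarrow> (fa \<Rightarrow> fa) \<Rightarrow> bool" where
  "rmod_map J' \<phi> \<longleftrightarrow> (\<forall>f\<in>finsupp. \<forall>g\<in>finsupp. \<phi> (fmul f g) - fmul (\<phi> f) g \<in> J')"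

end

theory Submission
  imports Defs
begin

lemmas fun_applys = plus_fun_apply zero_fun_apply minus_apply uminus_apply fsc_def
declare plus_fun_apply[simp del] zero_fun_apply[simp del] minus_apply[simp del] uminus_apply[simp del]

definition supp :: "('a \<Rightarrow> complex) \<Rightarrow> 'a set" where "supp f = {x. f x \<noteq> 0}"
definition pmon :: "'a \<Rightarrow> 'a \<Rightarrow> complex" where "pmon x = (\<lambda>u. if u = x then 1 else 0)"

lemma wmon_pmon: "wmon = pmon" by (simp add: wmon_def pmon_def fun_eq_iff)

lemma fsc_apply: "fsc c f x = c * f x" by (simp add: fsc_def)

lemma finsupp_iff: "f \<in> finsupp \<longleftrightarrow> finite (supp f)" by (simp add: finsupp_def supp_def)

lemma finsupp_zero[simp, intro]: "0 \<in> finsupp" by (simp add: finsupp_def fun_applys)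

lemma finsupp_add[intro]: "f \<in> finsupp \<Longrightarrow> g \<in> finsupp \<Longrightarrow> f + g \<in> finsupp"
proof -
  assume "f \<in> finsupp" "g \<in> finsupp"
  then have "finite ({x. f x \<noteq> 0} \<union> {x. g x \<noteq> 0})" by (simp add: finsupp_def)
  then show ?thesis unfolding finsupp_def mem_Collect_eq by (rule rev_finite_subset) (auto simp: fun_applys)
qed

lemma finsupp_fsc[intro]: "f \<in> finsupp \<Longrightarrow> fsc c f \<in> finsupp"
  unfolding finsupp_def mem_Collect_eq by (rule rev_finite_subset) (auto simp: fun_applys)

lemma finsupp_uminus[intro]: "f \<in> finsupp \<Longrightarrow> - f \<in> finsupp"
  unfolding finsupp_def by (simp add: fun_applys)

lemma finsupp_diff[intro]: "f \<in> finsupp \<Longrightarrow> g \<in> finsupp \<Longrightarrow> f - g \<in> finsupp"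
  using finsupp_add[of f "-g"] finsupp_uminus[of g] by simp

lemma finsupp_pmon[simp, intro]: "pmon x \<in> finsupp"
  unfolding finsupp_def pmon_def mem_Collect_eq by (rule rev_finite_subset[of "{x}"]) auto

lemma finsupp_wmon[simp, intro]: "wmon x \<in> finsupp" by (simp add: wmon_pmon)

lemma finsupp_sum[intro]: "(\<And>x. x \<in> S \<Longrightarrow> g x \<in> finsupp) \<Longrightarrow> sum g S \<in> finsupp"
  by (induction S rule: infinite_finite_induct) (auto simp: fun_applys)

lemma sum_fun_apply: "(\<Sum>x\<in>S. g x) u = (\<Sum>x\<in>S. g x u)"
  by (induction S rule: infinite_finite_induct) (auto simp: fun_applys)

lemma repr_superset:
  assumes "finite S" "supp f \<subseteq> S"
  shows "f = (\<Sum>x\<in>S. fsc (f x) (pmon x))"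
proof
  fix u
  have "(\<Sum>x\<in>S. fsc (f x) (pmon x)) u = (\<Sum>x\<in>S. f x * pmon x u)"
    by (simp add: sum_fun_apply fsc_apply)
  also have "\<dots> = (if u \<in> S then f u else 0)"
    by (simp add: pmon_def assms(1) if_distrib cong: if_cong)
  also have "\<dots> = f u" using assms(2) by (auto simp: supp_def)
  finally show "f u = (\<Sum>x\<in>S. fsc (f x) (pmon x)) u" by simp
qed

lemma repr: "f \<in> finsupp \<Longrightarrow> f = (\<Sum>x\<in>supp f. fsc (f x) (pmon x))"
  by (rule repr_superset) (auto simp: finsupp_iff)

lemma finsupp_induct[consumes 1, case_names zero add]:
  assumes f: "f \<in> finsupp" and z: "P 0"
    and a: "\<And>x c g. g \<in> finsupp \<Longrightarrow> P g \<Longrightarrow> P (fsc c (pmon x) + g)"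
  shows "P f"
proof -
  have "\<And>S. finite S \<Longrightarrow> P (\<Sum>x\<in>S. fsc (f x) (pmon x))"
  proof -
    fix S :: "'a set" assume "finite S"
    then show "P (\<Sum>x\<in>S. fsc (f x) (pmon x))"
    proof (induction S rule: finite_induct)
      case empty then show ?case using z by (simp add: zero_fun_def)
    next
      case (insert x F)
      have "(\<Sum>x\<in>F. fsc (f x) (pmon x)) \<in> finsupp" by (auto intro!: finsupp_sum)
      then show ?case using a[of "\<Sum>x\<in>F. fsc (f x) (pmon x)" "f x" x] insert by (simp add: sum.insert)
    qed
  qed
  then show ?thesis using repr[OF f] f by (metis finsupp_iff)
qed

lemma flinear_zero: "flinear \<phi> \<Longrightarrow> \<phi> 0 = 0"
  unfolding flinear_def by (metis add_cancel_right_right finsupp_zero add_0)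

lemma flinear_add: "flinear \<phi> \<Longrightarrow> f \<in> finsupp \<Longrightarrow> g \<in> finsupp \<Longrightarrow> \<phi> (f + g) = \<phi> f + \<phi> g"
  unfolding flinear_def by blast

lemma flinear_fsc: "flinear \<phi> \<Longrightarrow> f \<in> finsupp \<Longrightarrow> \<phi> (fsc c f) = fsc c (\<phi> f)"
  unfolding flinear_def by blast

lemma fsc_minus1: "fsc (-1) f = - f" by (simp add: fun_eq_iff fun_applys fsc_apply)

lemma fsc_uminus: "- fsc c f = fsc (-c) f" by (simp add: fun_eq_iff fun_applys fsc_apply)

lemma flinear_uminus: "flinear \<phi> \<Longrightarrow> f \<in> finsupp \<Longrightarrow> \<phi> (- f) = - \<phi> f"
  using flinear_fsc[of \<phi> f "-1"] by (simp add: fsc_minus1)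

lemma flinear_diff: "flinear \<phi> \<Longrightarrow> f \<in> finsupp \<Longrightarrow> g \<in> finsupp \<Longrightarrow> \<phi> (f - g) = \<phi> f - \<phi> g"
  using flinear_add[of \<phi> f "-g"] flinear_uminus[of \<phi> g] by auto

lemma flinear_sum: "flinear \<phi> \<Longrightarrow> (\<And>x. x \<in> S \<Longrightarrow> g x \<in> finsupp) \<Longrightarrow> \<phi> (sum g S) = (\<Sum>x\<in>S. \<phi> (g x))"
proof (induction S rule: infinite_finite_induct)
  case (infinite A) then show ?case using flinear_zero[of \<phi>] by (simp add: zero_fun_def)
next
  case empty then show ?case using flinear_zero[of \<phi>] by (simp add: zero_fun_def)
next
  case (insert x F)
  have "g x \<in> finsupp" "sum g F \<in> finsupp" using insert by (auto intro!: finsupp_sum)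
  then have "\<phi> (sum g (insert x F)) = \<phi> (g x) + \<phi> (sum g F)"
    using insert(1,2) flinear_add[OF insert(4)] by (simp only: sum.insert[OF insert(1,2)])
  then show ?case using insert by simp
qed

lemma fsc_add: "fsc c (f + g) = fsc c f + fsc c g" by (simp add: fun_eq_iff algebra_simps fun_applys fsc_apply)
lemma fsc_fsc: "fsc c (fsc d f) = fsc (c * d) f" by (simp add: fun_eq_iff fun_applys fsc_apply)
lemma fsc_diff: "fsc c (f - g) = fsc c f - fsc c g" by (simp add: fun_eq_iff algebra_simps fun_applys fsc_apply)
lemma fsc_zero[simp]: "fsc c 0 = 0" by (simp add: fun_eq_iff fun_applys fsc_apply)
lemma fsc_0[simp]: "fsc 0 f = 0" by (simp add: fun_eq_iff fun_applys fsc_apply)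
lemma fsc_1[simp]: "fsc 1 f = f" by (simp add: fun_eq_iff fun_applys fsc_apply)
lemma fsc_plus: "fsc (c + d) f = fsc c f + fsc d f" by (simp add: fun_eq_iff algebra_simps fun_applys fsc_apply)

lemma flinear_eqI:
  assumes "flinear \<phi>" "flinear \<psi>" "\<And>x. \<phi> (pmon x) = \<psi> (pmon x)" "f \<in> finsupp"
  shows "\<phi> f = \<psi> f"
  using assms(4)
proof (induction rule: finsupp_induct)
  case zero then show ?case using assms flinear_zero[of \<phi>] flinear_zero[of \<psi>] by (simp add: zero_fun_def)
next
  case (add x c g)
  have 1: "\<phi> (fsc c (pmon x) + g) = fsc c (\<phi> (pmon x)) + \<phi> g"
    using add(1) flinear_add[OF assms(1)] flinear_fsc[OF assms(1)] by (metis finsupp_fsc finsupp_pmon)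
  have 2: "\<psi> (fsc c (pmon x) + g) = fsc c (\<psi> (pmon x)) + \<psi> g"
    using add(1) flinear_add[OF assms(2)] flinear_fsc[OF assms(2)] by (metis finsupp_fsc finsupp_pmon)
  show ?case using 1 2 add(2) assms(3) by simp
qed

definition lext :: "('a \<Rightarrow> complex) \<Rightarrow> ('a \<Rightarrow> 'b \<Rightarrow> complex) \<Rightarrow> 'b \<Rightarrow> complex" where
  "lext f h = (\<Sum>x\<in>supp f. fsc (f x) (h x))"

lemma lext_superset: "finite S \<Longrightarrow> supp f \<subseteq> S \<Longrightarrow> lext f h = (\<Sum>x\<in>S. fsc (f x) (h x))"
  unfolding lext_def
  by (rule sum.mono_neutral_left) (auto simp: supp_def fun_eq_iff)

lemma lext_linear: "flinear (\<lambda>f. lext f h)"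
  unfolding flinear_def
proof (intro conjI ballI allI)
  fix f g :: "'a \<Rightarrow> complex" assume f: "f \<in> finsupp" and g: "g \<in> finsupp"
  let ?S = "supp f \<union> supp g"
  have fin: "finite ?S" using f g by (simp add: finsupp_iff)
  have s: "supp (f + g) \<subseteq> ?S" by (auto simp: supp_def fun_applys)
  show "lext (f + g) h = lext f h + lext g h"
    by (simp add: lext_superset[OF fin s] lext_superset[OF fin] sum.distrib[symmetric] fsc_plus plus_fun_apply)
next
  fix c and f :: "'a \<Rightarrow> complex" assume f: "f \<in> finsupp"
  have fin: "finite (supp f)" using f by (simp add: finsupp_iff)
  have s: "supp (fsc c f) \<subseteq> supp f" by (auto simp: supp_def fun_applys)
  show "lext (fsc c f) h = fsc c (lext f h)"
    using lext_superset[OF fin s, of h]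
    by (simp add: lext_def fun_eq_iff sum_fun_apply fsc_apply sum_distrib_left mult.assoc)
qed

lemma lext_pmon[simp]: "lext (pmon x) h = h x"
proof -
  have "lext (pmon x) h = (\<Sum>y\<in>{x}. fsc (pmon x y) (h y))"
    by (rule lext_superset) (auto simp: supp_def pmon_def)
  then show ?thesis by (simp add: pmon_def)
qed

lemma lext_finsupp: "(\<And>x. h x \<in> finsupp) \<Longrightarrow> lext f h \<in> finsupp"
  unfolding lext_def by (auto intro!: finsupp_sum)

section \<open>Multiplication in the free algebra\<close>

lemma fmul_add_left: "fmul (f + g) h = fmul f h + fmul g h"
  by (simp add: fmul_def fun_eq_iff fun_applys distrib_right sum.distrib)
lemma fmul_add_right: "fmul f (g + h) = fmul f g + fmul f h"
  by (simp add: fmul_def fun_eq_iff fun_applys distrib_left sum.distrib)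
lemma fmul_fsc_left: "fmul (fsc c f) g = fsc c (fmul f g)"
  by (simp add: fmul_def fun_eq_iff fun_applys sum_distrib_left mult.assoc)
lemma fmul_fsc_right: "fmul f (fsc c g) = fsc c (fmul f g)"
  by (simp add: fmul_def fun_eq_iff fun_applys sum_distrib_left mult.left_commute)
lemma fmul_zero_left[simp]: "fmul 0 g = 0"
  by (simp add: fmul_def fun_eq_iff fun_applys)
lemma fmul_zero_right[simp]: "fmul f 0 = 0"
  by (simp add: fmul_def fun_eq_iff fun_applys)
lemma fmul_diff_left: "fmul (f - g) h = fmul f h - fmul g h"
  by (simp add: fmul_def fun_eq_iff fun_applys left_diff_distrib sum_subtractf)
lemma fmul_diff_right: "fmul f (g - h) = fmul f g - fmul f h"
  by (simp add: fmul_def fun_eq_iff fun_applys right_diff_distrib sum_subtractf)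
lemma fmul_uminus_left: "fmul (- f) h = - fmul f h"
  by (simp add: fmul_def fun_eq_iff fun_applys sum_negf)
lemma fmul_uminus_right: "fmul f (- h) = - fmul f h"
  by (simp add: fmul_def fun_eq_iff fun_applys sum_negf)

lemmas fmul_lin = fmul_add_left fmul_add_right fmul_fsc_left fmul_fsc_right fmul_diff_left
  fmul_diff_right fmul_uminus_left fmul_uminus_right fmul_zero_left fmul_zero_right

lemma take_eq_len: "k \<le> length w \<Longrightarrow> take k w = u \<Longrightarrow> k = length u"
  by auto

lemma fmul_wmon_left_apply:
  "fmul (wmon u) g w = (if length u \<le> length w \<and> take (length u) w = u then g (drop (length u) w) else 0)"
proof -
  have "fmul (wmon u) g w = (\<Sum>k\<le>length w. if k = length u then
          (if take (length u) w = u then g (drop (length u) w) else 0) else 0)"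
    unfolding fmul_def wmon_def
    by (rule sum.cong) (auto)
  also have "\<dots> = (if length u \<le> length w \<and> take (length u) w = u then g (drop (length u) w) else 0)"
    by (subst sum.delta) auto
  finally show ?thesis .
qed

lemma fmul_wmon_right_apply:
  "fmul f (wmon v) w = (if length v \<le> length w \<and> drop (length w - length v) w = v then f (take (length w - length v) w) else 0)"
proof -
  have "fmul f (wmon v) w = (\<Sum>k\<le>length w. if k = length w - length v then
          (if length v \<le> length w \<and> drop (length w - length v) w = v then f (take (length w - length v) w) else 0) else 0)"
    unfolding fmul_def wmon_def
    by (rule sum.cong) auto
  also have "\<dots> = (if length v \<le> length w \<and> drop (length w - length v) w = v then f (take (length w - length v) w) else 0)"
    by (subst sum.delta) auto
  finally show ?thesis .
qed

lemma fmul_wmon: "fmul (wmon u) (wmon v) = wmon (u @ v)"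
proof
  fix w
  show "fmul (wmon u) (wmon v) w = wmon (u @ v) w"
    unfolding fmul_wmon_left_apply
    by (auto simp: wmon_def) (metis append_take_drop_id)
qed

lemma fmul_fone_left[simp]: "fmul fone f = f"
  by (simp add: fun_eq_iff fone_def fmul_wmon_left_apply)

lemma fmul_fone_right[simp]: "fmul f fone = f"
  by (simp add: fun_eq_iff fone_def fmul_wmon_right_apply)

lemma finsupp_fmul[intro]:
  assumes f: "f \<in> finsupp" and g: "g \<in> finsupp"
  shows "fmul f g \<in> finsupp"
proof -
  have fin: "finite ((\<lambda>(x, y). x @ y) ` (supp f \<times> supp g))"
    using f g by (simp add: finsupp_iff)
  have "supp (fmul f g) \<subseteq> (\<lambda>(x, y). x @ y) ` (supp f \<times> supp g)"
  proof
    fix w assume "w \<in> supp (fmul f g)"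
    then have "(\<Sum>k\<le>length w. f (take k w) * g (drop k w)) \<noteq> 0" by (simp add: supp_def fmul_def)
    then obtain k where "f (take k w) * g (drop k w) \<noteq> 0" using sum.not_neutral_contains_not_neutral by blast
    then have "take k w \<in> supp f" "drop k w \<in> supp g" by (auto simp: supp_def)
    then have "(take k w, drop k w) \<in> supp f \<times> supp g" by simp
    then show "w \<in> (\<lambda>(x, y). x @ y) ` (supp f \<times> supp g)"
      by (rule rev_image_eqI) simp
  qed
  then show ?thesis using fin by (simp add: finsupp_iff finite_subset)
qed

lemma flinear_fmul_left: "flinear (\<lambda>f. fmul f g)"
  by (simp add: flinear_def fmul_add_left fmul_fsc_left)
lemma flinear_fmul_right: "flinear (\<lambda>g. fmul f g)"
  by (simp add: flinear_def fmul_add_right fmul_fsc_right)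

lemma wmon_pmon': "pmon = wmon" by (simp add: wmon_pmon)

lemma fmul_assoc:
  assumes f: "f \<in> finsupp" and g: "g \<in> finsupp" and h: "h \<in> finsupp"
  shows "fmul (fmul f g) h = fmul f (fmul g h)"
proof -
  have w2: "fmul (fmul (wmon u) (wmon v)) h = fmul (wmon u) (fmul (wmon v) h)" for u v
    by (rule flinear_eqI[OF _ _ _ h]) (auto simp: flinear_def fmul_lin wmon_pmon' fmul_wmon)
  have w3: "fmul (fmul (wmon u) g) h = fmul (wmon u) (fmul g h)" for u
    by (rule flinear_eqI[OF _ _ _ g, where \<phi>="\<lambda>g. fmul (fmul (wmon u) g) h"])
      (auto simp: flinear_def fmul_lin wmon_pmon' w2)
  show ?thesis
    by (rule flinear_eqI[OF _ _ _ f, where \<phi>="\<lambda>f. fmul (fmul f g) h"])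
      (auto simp: flinear_def fmul_lin wmon_pmon' w3)
qed

lemma finsupp_gens[simp, intro]: "gA \<in> finsupp" "gB \<in> finsupp" "gC \<in> finsupp" "gD \<in> finsupp" "fone \<in> finsupp"
  by (auto simp: gA_def gB_def gC_def gD_def fone_def)

lemma lspan_sub: assumes S: "S \<subseteq> lspan T" shows "lspan S \<subseteq> lspan T"
proof
  fix x assume "x \<in> lspan S"
  then show "x \<in> lspan T"
    by (induction rule: lspan.induct) (use S in \<open>auto intro: lspan.intros\<close>)
qed

lemma lspan_mono: "S \<subseteq> T \<Longrightarrow> lspan S \<subseteq> lspan T"
  by (rule lspan_sub) (auto intro: lspan.intros)

lemma lspan_uminus: "x \<in> lspan S \<Longrightarrow> - x \<in> lspan S"
  using lspan_scale[of x S "-1"] by (simp add: fsc_minus1)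

lemma lspan_diff: "x \<in> lspan S \<Longrightarrow> y \<in> lspan S \<Longrightarrow> x - y \<in> lspan S"
  using lspan_add[of x S "-y"] lspan_uminus[of y S] by simp

lemma lspan_finsupp: assumes S: "S \<subseteq> finsupp" shows "lspan S \<subseteq> finsupp"
proof
  fix x assume "x \<in> lspan S"
  then show "x \<in> finsupp" by (induction rule: lspan.induct) (use S in auto)
qed

lemma lspan_sum: "(\<And>i. i \<in> I \<Longrightarrow> g i \<in> lspan S) \<Longrightarrow> sum g I \<in> lspan S"
  by (induction I rule: infinite_finite_induct) (auto intro: lspan.intros)

lemma lspan_image:
  assumes S: "S \<subseteq> finsupp" and L: "flinear L" and img: "\<And>x. x \<in> S \<Longrightarrow> L x \<in> lspan T"
    and x: "x \<in> lspan S"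
  shows "L x \<in> lspan T"
proof -
  have "L x \<in> lspan T \<and> x \<in> finsupp" using x
  proof (induction rule: lspan.induct)
    case lspan_zero then show ?case using flinear_zero[OF L] lspan.lspan_zero[of T] by simp
  next
    case (lspan_base x) then show ?case using img S by auto
  next
    case (lspan_add x y) then show ?case using L by (auto simp: flinear_add intro: lspan.intros)
  next
    case (lspan_scale x c) then show ?case using L by (auto simp: flinear_fsc intro: lspan.intros)
  qed
  then show ?thesis ..
qed

definition g1 :: "complex \<Rightarrow> fa" where "g1 \<sigma> = gA - gD + fsc \<sigma> gB"
definition g2 :: "complex \<Rightarrow> fa" where "g2 \<pi> = fsc \<pi> gB + gC"

definition Rset :: "complex \<Rightarrow> fa set" where
  "Rset q = {fmul (fmul x r) y | x r y. r \<in> slq_rels q \<and> x \<in> finsupp \<and> y \<in> finsupp}"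
definition Cset :: "complex \<Rightarrow> complex \<Rightarrow> fa set" where
  "Cset \<sigma> \<pi> = {fmul c y | c y. c \<in> {g1 \<sigma>, g2 \<pi>} \<and> y \<in> finsupp}"
definition Jc :: "complex \<Rightarrow> complex \<Rightarrow> complex \<Rightarrow> fa set" where
  "Jc q \<sigma> \<pi> = lspan (Rset q \<union> Cset \<sigma> \<pi>)"

lemma Jset_Jc: "Jset q s \<mu> \<nu> = Jc q (2 * s * complex_of_real \<mu>) (q * complex_of_real \<nu>)"
  unfolding Jset_def Jc_def Rset_def Cset_def Cgens_def g1_def g2_def by simp

lemma finsupp_g[simp, intro]: "g1 \<sigma> \<in> finsupp" "g2 \<pi> \<in> finsupp"
  by (auto simp: g1_def g2_def)

lemma finsupp_rels: "r \<in> slq_rels q \<Longrightarrow> r \<in> finsupp"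
  by (auto simp: slq_rels_def intro!: finsupp_diff finsupp_fmul finsupp_fsc)

lemma Rset_finsupp: "Rset q \<subseteq> finsupp"
  by (auto simp: Rset_def intro!: finsupp_fmul dest: finsupp_rels)
lemma Cset_finsupp: "Cset \<sigma> \<pi> \<subseteq> finsupp"
  by (auto simp: Cset_def)

lemma Jc_finsupp: "j \<in> Jc q \<sigma> \<pi> \<Longrightarrow> j \<in> finsupp"
  using lspan_finsupp[of "Rset q \<union> Cset \<sigma> \<pi>"] Rset_finsupp Cset_finsupp
  unfolding Jc_def by blast

lemma J_rel: "r \<in> slq_rels q \<Longrightarrow> x \<in> finsupp \<Longrightarrow> y \<in> finsupp \<Longrightarrow> fmul (fmul x r) y \<in> Jc q \<sigma> \<pi>"
  unfolding Jc_def Rset_def by (rule lspan_base) blast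

lemma J_rel0: "r \<in> slq_rels q \<Longrightarrow> r \<in> Jc q \<sigma> \<pi>"
  using J_rel[of r q fone fone] by simp

lemma J_g1: "y \<in> finsupp \<Longrightarrow> fmul (g1 \<sigma>) y \<in> Jc q \<sigma> \<pi>"
  unfolding Jc_def Cset_def by (rule lspan_base) blast
lemma J_g2: "y \<in> finsupp \<Longrightarrow> fmul (g2 \<pi>) y \<in> Jc q \<sigma> \<pi>"
  unfolding Jc_def Cset_def by (rule lspan_base) blast

lemma J_add: "x \<in> Jc q \<sigma> \<pi> \<Longrightarrow> y \<in> Jc q \<sigma> \<pi> \<Longrightarrow> x + y \<in> Jc q \<sigma> \<pi>"
  unfolding Jc_def by (rule lspan_add)
lemma J_diff: "x \<in> Jc q \<sigma> \<pi> \<Longrightarrow> y \<in> Jc q \<sigma> \<pi> \<Longrightarrow> x - y \<in> Jc q \<sigma> \<pi>"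
  unfolding Jc_def by (rule lspan_diff)
lemma J_fsc: "x \<in> Jc q \<sigma> \<pi> \<Longrightarrow> fsc c x \<in> Jc q \<sigma> \<pi>"
  unfolding Jc_def by (rule lspan_scale)
lemma J_uminus: "x \<in> Jc q \<sigma> \<pi> \<Longrightarrow> - x \<in> Jc q \<sigma> \<pi>"
  unfolding Jc_def by (rule lspan_uminus)
lemma J_zero: "0 \<in> Jc q \<sigma> \<pi>"
  unfolding Jc_def by (rule lspan_zero)

lemma J_right:
  assumes j: "j \<in> Jc q \<sigma> \<pi>" and y: "y \<in> finsupp"
  shows "fmul j y \<in> Jc q \<sigma> \<pi>"
proof -
  have "(\<lambda>j. fmul j y) j \<in> lspan (Rset q \<union> Cset \<sigma> \<pi>)"
  proof (rule lspan_image[OF _ flinear_fmul_left])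
    show "Rset q \<union> Cset \<sigma> \<pi> \<subseteq> finsupp" using Rset_finsupp Cset_finsupp by blast
    show "j \<in> lspan (Rset q \<union> Cset \<sigma> \<pi>)" using j by (simp add: Jc_def)
  next
    fix x assume "x \<in> Rset q \<union> Cset \<sigma> \<pi>"
    then show "fmul x y \<in> lspan (Rset q \<union> Cset \<sigma> \<pi>)"
    proof
      assume "x \<in> Rset q"
      then obtain a r b where x: "x = fmul (fmul a r) b" "r \<in> slq_rels q" "a \<in> finsupp" "b \<in> finsupp"
        by (auto simp: Rset_def)
      then have "fmul x y = fmul (fmul a r) (fmul b y)"
        using y finsupp_rels[OF x(2)] by (simp add: fmul_assoc finsupp_fmul)
      then show ?thesis using x y J_rel[of r q a "fmul b y" \<sigma> \<pi>] by (simp add: Jc_def finsupp_fmul)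
    next
      assume "x \<in> Cset \<sigma> \<pi>"
      then obtain c b where x: "x = fmul c b" "c \<in> {g1 \<sigma>, g2 \<pi>}" "b \<in> finsupp"
        by (auto simp: Cset_def)
      then have "fmul x y = fmul c (fmul b y)"
        using y by (auto simp: fmul_assoc)
      then show ?thesis using x y J_g1[of "fmul b y" \<sigma> q \<pi>] J_g2[of "fmul b y" \<pi> q \<sigma>]
        by (auto simp: Jc_def finsupp_fmul)
    qed
  qed
  then show ?thesis by (simp add: Jc_def)
qed

lemma J_left:
  assumes x: "x \<in> finsupp" and h1: "fmul x (g1 \<sigma>) \<in> Jc q \<sigma>' \<pi>'" and h2: "fmul x (g2 \<pi>) \<in> Jc q \<sigma>' \<pi>'"
    and j: "j \<in> Jc q \<sigma> \<pi>"
  shows "fmul x j \<in> Jc q \<sigma>' \<pi>'"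
proof -
  have "(\<lambda>j. fmul x j) j \<in> lspan (Rset q \<union> Cset \<sigma>' \<pi>')"
  proof (rule lspan_image[OF _ flinear_fmul_right])
    show "Rset q \<union> Cset \<sigma> \<pi> \<subseteq> finsupp" using Rset_finsupp Cset_finsupp by blast
    show "j \<in> lspan (Rset q \<union> Cset \<sigma> \<pi>)" using j by (simp add: Jc_def)
  next
    fix z assume "z \<in> Rset q \<union> Cset \<sigma> \<pi>"
    then show "fmul x z \<in> lspan (Rset q \<union> Cset \<sigma>' \<pi>')"
    proof
      assume "z \<in> Rset q"
      then obtain a r b where z: "z = fmul (fmul a r) b" "r \<in> slq_rels q" "a \<in> finsupp" "b \<in> finsupp"
        by (auto simp: Rset_def)
      then have "fmul x z = fmul (fmul (fmul x a) r) b"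
        using x finsupp_rels[OF z(2)] by (simp add: fmul_assoc finsupp_fmul)
      then show ?thesis using z x J_rel[of r q "fmul x a" b \<sigma>' \<pi>'] by (simp add: Jc_def finsupp_fmul)
    next
      assume "z \<in> Cset \<sigma> \<pi>"
      then obtain c b where z: "z = fmul c b" "c \<in> {g1 \<sigma>, g2 \<pi>}" "b \<in> finsupp"
        by (auto simp: Cset_def)
      then have e: "fmul x z = fmul (fmul x c) b"
        using x by (auto simp: fmul_assoc)
      have "fmul x c \<in> Jc q \<sigma>' \<pi>'" using z(2) h1 h2 by auto
      then show ?thesis using e J_right z(3) by (simp add: Jc_def)
    qed
  qed
  then show ?thesis by (simp add: Jc_def)
qed

definition "rel1 q = fmul gA gB - fsc q (fmul gB gA)"
definition "rel3 = fmul gB gC - fmul gC gB"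
definition "rel4 q = fmul gB gD - fsc q (fmul gD gB)"
definition "rel5 q = fmul gC gD - fsc q (fmul gD gC)"
definition "rel6 q = fmul gD gA - fsc (inverse q) (fmul gB gC) - fone"
definition "rel7 q = fmul gA gD - fsc q (fmul gB gC) - fone"

lemmas gdefs = gA_def gB_def gC_def gD_def fone_def g1_def g2_def
lemmas reldefs = rel1_def rel3_def rel4_def rel5_def rel6_def rel7_def

lemma rels_in_J: "rel1 q \<in> Jc q \<sigma> \<pi>" "rel3 \<in> Jc q \<sigma> \<pi>" "rel4 q \<in> Jc q \<sigma> \<pi>"
  "rel5 q \<in> Jc q \<sigma> \<pi>" "rel6 q \<in> Jc q \<sigma> \<pi>" "rel7 q \<in> Jc q \<sigma> \<pi>"
  by (rule J_rel0; simp add: slq_rels_def reldefs)+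

lemma fun_eq_on_words: "(\<And>w. w \<in> set L \<Longrightarrow> f w = g w) \<Longrightarrow> (\<And>w. w \<notin> set L \<Longrightarrow> f w = g w) \<Longrightarrow> f = g"
  by (metis ext)

lemma S2: assumes q: "q \<noteq> 0"
  shows "fmul (gD - fsc B gB) (g2 \<pi>) = fsc (inverse q) (fmul (g2 \<pi>) gD) - fsc B (fmul (g2 \<pi>) gB)
     - fsc (\<pi>/q) (rel4 q) - fsc (inverse q) (rel5 q) - fsc B rel3"
  unfolding gdefs reldefs
  apply (simp only: fmul_lin fmul_wmon)
  apply (rule fun_eq_on_words[where L="[[GD,GB],[GD,GC],[GB,GB],[GB,GC],[GB,GD],[GC,GB],[GC,GD]]"])
  using q by (auto simp: fun_applys wmon_def field_simps)

lemma S1: assumes q: "q \<noteq> 0"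
  shows "fmul (gD - fsc B gB) (g1 (B / q + B' * q)) = rel6 q - rel7 q + fmul (g1 (B + B')) gD
     - fsc (B/q) (fmul (g1 (B + B')) gB) + fsc (B/q^2 - (B / q + B' * q)/q) (rel4 q) + fsc (B/q) (rel1 q)
     + fsc (1/q - q) (fmul (g2 (B * B')) gB) + fsc (1/q - q) rel3"
  unfolding gdefs reldefs
  apply (simp only: fmul_lin fmul_wmon append.simps)
  apply (rule fun_eq_on_words[where L="[[GD,GA],[GD,GD],[GD,GB],[GB,GA],[GB,GD],[GB,GB],[GA,GB],[GB,GC],[GC,GB],[GA,GD],[]]"])
  using q by (auto simp: fun_applys wmon_def field_simps power2_eq_square)

lemma I1: assumes q: "q \<noteq> 0"
  shows "fmul (gD - fsc B gB) (gD - fsc (B' * q) gB) - fone = rel7 q - fmul (g1 (B + B')) gD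
     + fsc B' (rel4 q) + fsc q (fmul (g2 (B * B')) gB) + fsc q rel3"
  unfolding gdefs reldefs
  apply (simp only: fmul_lin fmul_wmon append.simps)
  apply (rule fun_eq_on_words[where L="[[GD,GA],[GD,GD],[GD,GB],[GB,GA],[GB,GD],[GB,GB],[GA,GB],[GB,GC],[GC,GB],[GA,GD],[]]"])
  using q by (auto simp: fun_applys wmon_def field_simps)

definition ystep :: "complex \<Rightarrow> fa" where "ystep B = gD - fsc B gB"

lemma finsupp_ystep[simp, intro]: "ystep B \<in> finsupp" by (auto simp: ystep_def)

lemma step_g1: "q \<noteq> 0 \<Longrightarrow> fmul (ystep B) (g1 (B / q + B' * q)) \<in> Jc q (B + B') (B * B')"
  unfolding ystep_def S1
  by (intro J_add J_diff J_fsc rels_in_J J_g1 J_g2 finsupp_gens)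

lemma step_g2: "q \<noteq> 0 \<Longrightarrow> fmul (ystep B) (g2 \<pi>) \<in> Jc q \<sigma> \<pi>"
  unfolding ystep_def S2
  by (intro J_add J_diff J_fsc rels_in_J J_g1 J_g2 finsupp_gens)

lemma step_inv: "q \<noteq> 0 \<Longrightarrow> fmul (ystep B) (ystep (B' * q)) - fone \<in> Jc q (B + B') (B * B')"
  unfolding ystep_def I1
  by (intro J_add J_diff J_fsc rels_in_J J_g1 J_g2 finsupp_gens)

lemma step_J: "q \<noteq> 0 \<Longrightarrow> j \<in> Jc q (B / q + B' * q) (B * B') \<Longrightarrow> fmul (ystep B) j \<in> Jc q (B + B') (B * B')"
  by (rule J_left[OF finsupp_ystep step_g1 step_g2])

type_synonym ta = "gen list \<times> gen list \<Rightarrow> complex"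

definition tmul :: "ta \<Rightarrow> ta \<Rightarrow> ta" where
  "tmul H K = (\<lambda>(u, v). \<Sum>k\<le>length u. \<Sum>l\<le>length v. H (take k u, take l v) * K (drop k u, drop l v))"

lemma tmul_apply: "tmul H K (u, v) = (\<Sum>k\<le>length u. \<Sum>l\<le>length v. H (take k u, take l v) * K (drop k u, drop l v))"
  by (simp add: tmul_def)

lemma tmul_add_left: "tmul (H + H') K = tmul H K + tmul H' K"
  by (simp add: tmul_def fun_eq_iff fun_applys distrib_right sum.distrib)
lemma tmul_add_right: "tmul H (K + K') = tmul H K + tmul H K'"
  by (simp add: tmul_def fun_eq_iff fun_applys distrib_left sum.distrib)
lemma tmul_fsc_left: "tmul (fsc c H) K = fsc c (tmul H K)"
  by (simp add: tmul_def fun_eq_iff fun_applys sum_distrib_left mult.assoc)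
lemma tmul_fsc_right: "tmul H (fsc c K) = fsc c (tmul H K)"
  by (simp add: tmul_def fun_eq_iff fun_applys sum_distrib_left mult.left_commute)
lemma tmul_diff_left: "tmul (H - H') K = tmul H K - tmul H' K"
  by (simp add: tmul_def fun_eq_iff fun_applys left_diff_distrib sum_subtractf)
lemma tmul_uminus_left: "tmul (- H) K = - tmul H K"
  by (simp add: tmul_def fun_eq_iff fun_applys sum_negf)
lemma tmul_zero_left[simp]: "tmul 0 K = 0"
  by (simp add: tmul_def fun_eq_iff fun_applys)

lemma tens_apply: "tens x y (u, v) = x u * y v" by (simp add: tens_def)

lemma tmul_tens: "tmul (tens x y) (tens x' y') = tens (fmul x x') (fmul y y')"
proof -
  have "tmul (tens x y) (tens x' y') (u, v) = tens (fmul x x') (fmul y y') (u, v)" for u v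
    by (simp add: tmul_apply tens_apply fmul_def sum_product mult_ac)
  then show ?thesis by (auto simp: fun_eq_iff)
qed

lemma tens_add_left: "tens (x + x') y = tens x y + tens x' y"
  by (simp add: tens_def fun_eq_iff fun_applys distrib_right)
lemma tens_add_right: "tens x (y + y') = tens x y + tens x y'"
  by (simp add: tens_def fun_eq_iff fun_applys distrib_left)
lemma tens_diff_left: "tens (x - x') y = tens x y - tens x' y"
  by (simp add: tens_def fun_eq_iff fun_applys left_diff_distrib)
lemma tens_diff_right: "tens x (y - y') = tens x y - tens x y'"
  by (simp add: tens_def fun_eq_iff fun_applys right_diff_distrib)
lemma tens_fsc_left: "tens (fsc c x) y = fsc c (tens x y)"
  by (simp add: tens_def fun_eq_iff fun_applys)
lemma tens_fsc_right: "tens x (fsc c y) = fsc c (tens x y)"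
  by (simp add: tens_def fun_eq_iff fun_applys)
lemma tens_zero_left[simp]: "tens 0 y = 0" by (simp add: tens_def fun_eq_iff fun_applys)
lemma tens_zero_right[simp]: "tens x 0 = 0" by (simp add: tens_def fun_eq_iff fun_applys)
lemma tens_pmon: "tens (pmon u) (pmon v) = pmon (u, v)"
  by (simp add: tens_def fun_eq_iff pmon_def)

lemmas tens_lin = tens_add_left tens_add_right tens_diff_left tens_diff_right tens_fsc_left tens_fsc_right

lemma finsupp_tens[intro]: assumes "x \<in> finsupp" "y \<in> finsupp" shows "tens x y \<in> finsupp"
proof -
  have "supp (tens x y) \<subseteq> supp x \<times> supp y" by (auto simp: supp_def tens_def)
  then show ?thesis using assms by (auto simp: finsupp_iff intro: finite_subset)
qed

lemma finsupp_tmul[intro]: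
  assumes H: "H \<in> finsupp" and K: "K \<in> finsupp"
  shows "tmul H K \<in> finsupp"
proof -
  let ?m = "\<lambda>((a, b), (c, d)). (a @ c, b @ d)"
  have fin: "finite (?m ` (supp H \<times> supp K))" using H K by (simp add: finsupp_iff)
  have "supp (tmul H K) \<subseteq> ?m ` (supp H \<times> supp K)"
  proof
    fix p assume "p \<in> supp (tmul H K)"
    then obtain u v where p: "p = (u, v)" and "tmul H K (u, v) \<noteq> 0" by (cases p) (auto simp: supp_def)
    then obtain k where "(\<Sum>l\<le>length v. H (take k u, take l v) * K (drop k u, drop l v)) \<noteq> 0"
      unfolding tmul_apply using sum.not_neutral_contains_not_neutral by blast
    then obtain l where "H (take k u, take l v) * K (drop k u, drop l v) \<noteq> 0"
      using sum.not_neutral_contains_not_neutral by blast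
    then have "((take k u, take l v), (drop k u, drop l v)) \<in> supp H \<times> supp K" by (auto simp: supp_def)
    then show "p \<in> ?m ` (supp H \<times> supp K)" unfolding p by (rule rev_image_eqI) simp
  qed
  then show ?thesis using fin by (simp add: finsupp_iff finite_subset)
qed

section \<open>Comultiplication is multiplicative\<close>

definition compat :: "gen list \<Rightarrow> gen list \<Rightarrow> bool" where
  "compat u v \<longleftrightarrow> length u = length v \<and> (\<forall>i<length u. gcol (u ! i) = grow (v ! i))"
definition mrg :: "gen list \<Rightarrow> gen list \<Rightarrow> gen list" where
  "mrg u v = map2 (\<lambda>x y. gent (grow x) (gcol y)) u v"

lemma fcomult_apply: "fcomult f (u, v) = (if compat u v then f (mrg u v) else 0)"
  by (auto simp: fcomult_def compat_def mrg_def)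

lemma compat_split:
  assumes k: "k \<le> length u" and l: "l \<le> length v"
  shows "(compat (take k u) (take l v) \<and> compat (drop k u) (drop l v)) \<longleftrightarrow> (compat u v \<and> k = l)"
proof
  assume a: "compat (take k u) (take l v) \<and> compat (drop k u) (drop l v)"
  then have kl: "k = l" and len: "length u = length v"
    using k l by (auto simp: compat_def)
  have "gcol (u ! i) = grow (v ! i)" if i: "i < length u" for i
  proof (cases "i < k")
    case True
    then show ?thesis using a kl i by (auto simp: compat_def)
  next
    case False
    then have "i - k < length (drop k u)" using i by simp
    then have "gcol (drop k u ! (i - k)) = grow (drop l v ! (i - k))" using a by (auto simp: compat_def)
    then show ?thesis using False kl k l by (simp add: nth_drop)
  qed
  then show "compat u v \<and> k = l" using kl len by (simp add: compat_def)
next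
  assume "compat u v \<and> k = l"
  then show "compat (take k u) (take l v) \<and> compat (drop k u) (drop l v)"
    using k l by (auto simp: compat_def)
qed

lemma compat_len: "compat u v \<Longrightarrow> length u = length v" by (simp add: compat_def)

lemma mrg_take: "mrg (take k u) (take k v) = take k (mrg u v)"
  by (simp add: mrg_def take_map take_zip)
lemma mrg_drop: "mrg (drop k u) (drop k v) = drop k (mrg u v)"
  by (simp add: mrg_def drop_map drop_zip)
lemma length_mrg: "compat u v \<Longrightarrow> length (mrg u v) = length u"
  by (simp add: mrg_def compat_def)

lemma fcomult_fmul: "fcomult (fmul f g) = tmul (fcomult f) (fcomult g)"
proof -
  have "fcomult (fmul f g) (u, v) = tmul (fcomult f) (fcomult g) (u, v)" for u v
  proof -
    have "tmul (fcomult f) (fcomult g) (u, v) =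
      (\<Sum>k\<le>length u. \<Sum>l\<le>length v. if l = k then (if compat u v then f (take k (mrg u v)) * g (drop k (mrg u v)) else 0) else 0)"
      unfolding tmul_apply fcomult_apply
    proof (intro sum.cong refl)
      fix k l assume k: "k \<in> {..length u}" and l: "l \<in> {..length v}"
      show "(if compat (take k u) (take l v) then f (mrg (take k u) (take l v)) else 0) *
            (if compat (drop k u) (drop l v) then g (mrg (drop k u) (drop l v)) else 0) =
            (if l = k then if compat u v then f (take k (mrg u v)) * g (drop k (mrg u v)) else 0 else 0)"
        using compat_split[of k u l v] k l by (auto simp: mrg_take mrg_drop)
    qed
    also have "\<dots> = (\<Sum>k\<le>length u. if k \<le> length v then (if compat u v then f (take k (mrg u v)) * g (drop k (mrg u v)) else 0) else 0)"
      by (intro sum.cong refl) (simp add: sum.delta)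
    also have "\<dots> = (if compat u v then (\<Sum>k\<le>length u. f (take k (mrg u v)) * g (drop k (mrg u v))) else 0)"
    proof (cases "compat u v")
      case True
      then have "length u = length v" by (rule compat_len)
      then show ?thesis using True by (auto intro!: sum.cong)
    next
      case False
      then show ?thesis by (simp add: sum.neutral)
    qed
    also have "\<dots> = fcomult (fmul f g) (u, v)"
      by (simp add: fcomult_apply fmul_def length_mrg)
    finally show ?thesis by simp
  qed
  then show ?thesis by (auto simp: fun_eq_iff)
qed

lemma fcomult_add: "fcomult (f + g) = fcomult f + fcomult g"
  by (auto simp: fun_eq_iff fcomult_apply fun_applys)
lemma fcomult_diff: "fcomult (f - g) = fcomult f - fcomult g"
  by (auto simp: fun_eq_iff fcomult_apply fun_applys)
lemma fcomult_fsc: "fcomult (fsc c f) = fsc c (fcomult f)"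
  by (auto simp: fun_eq_iff fcomult_apply fun_applys)
lemma fcomult_uminus: "fcomult (- f) = - fcomult f"
  by (auto simp: fun_eq_iff fcomult_apply fun_applys)

lemma flinear_fcomult: "flinear fcomult"
  by (simp add: flinear_def fcomult_add fcomult_fsc)

lemma finsupp_fcomult[intro]:
  assumes f: "f \<in> finsupp" shows "fcomult f \<in> finsupp"
proof -
  have "supp (fcomult f) \<subseteq> (\<Union>w\<in>supp f. {p. compat (fst p) (snd p) \<and> mrg (fst p) (snd p) = w})"
    by (auto simp: supp_def fcomult_apply split: if_splits)
  moreover have "finite {p. compat (fst p) (snd p) \<and> mrg (fst p) (snd p) = w}" for w
  proof -
    have "{p. compat (fst p) (snd p) \<and> mrg (fst p) (snd p) = w} \<subseteq>
          {u. length u = length w} \<times> {v. length v = length w}"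
      by (auto simp: compat_def mrg_def)
    moreover have "finite {u :: gen list. length u = length w}"
    proof -
      have "finite (UNIV :: gen set)"
      proof -
        have "(UNIV :: gen set) = {GA, GB, GC, GD}" by (auto intro: gen.exhaust)
        then show ?thesis by (metis finite.emptyI finite.insertI)
      qed
      then show ?thesis using finite_lists_length_eq[of "UNIV :: gen set" "length w"] by simp
    qed
    ultimately show ?thesis by (auto intro: finite_subset)
  qed
  ultimately show ?thesis using f by (auto simp: finsupp_iff intro: finite_subset)
qed

lemma fcomult_wmon1:
  "fcomult (wmon [g]) = (\<Sum>k\<in>{1::nat, 2}. tens (wmon [gent (grow g) k]) (wmon [gent k (gcol g)]))"
proof -
  have "fcomult (wmon [g]) (u, v) = (\<Sum>k\<in>{1::nat, 2}. tens (wmon [gent (grow g) k]) (wmon [gent k (gcol g)])) (u, v)" for u v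
  proof (cases "length u = 1 \<and> length v = 1")
    case True
    then obtain x y where "u = [x]" "v = [y]"
      by (metis One_nat_def length_0_conv length_Suc_conv)
    then show ?thesis
      by (cases x; cases y; cases g) (auto simp: sum_fun_apply tens_apply wmon_def fcomult_apply compat_def mrg_def gent_def fun_applys)
  next
    case False
    then have "(\<Sum>k\<in>{1::nat, 2}. tens (wmon [gent (grow g) k]) (wmon [gent k (gcol g)])) (u, v) = 0"
      by (auto simp: sum_fun_apply tens_apply wmon_def fun_applys)
    moreover have "fcomult (wmon [g]) (u, v) = 0"
    proof (cases "compat u v")
      case True
      then have "length (mrg u v) \<noteq> 1" using False by (auto simp: length_mrg dest: compat_len)
      then show ?thesis by (auto simp: fcomult_apply wmon_def)
    qed (simp add: fcomult_apply)
    ultimately show ?thesis by simp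
  qed
  then show ?thesis by (auto simp: fun_eq_iff)
qed

lemma fcomult_gB: "fcomult gB = tens gA gB + tens gB gD"
  by (simp add: gB_def gA_def gD_def fcomult_wmon1 gent_def)
lemma fcomult_gD: "fcomult gD = tens gC gB + tens gD gD"
  by (simp add: gC_def gB_def gD_def fcomult_wmon1 gent_def add.commute)

lemma grouplike_ystep:
  "fcomult (ystep B) - tens (ystep B) (ystep B) = tens (g2 (B * B') - fsc B (g1 (B + B'))) gB"
  unfolding ystep_def g1_def g2_def
  by (simp add: fcomult_diff fcomult_fsc fcomult_gB fcomult_gD tens_lin fsc_add fsc_diff fsc_fsc algebra_simps fsc_plus)

lemma tmap_lext: "tmap \<phi> \<psi> h = lext h (\<lambda>p. tens (\<phi> (wmon (fst p))) (\<psi> (wmon (snd p))))"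
proof -
  have "tmap \<phi> \<psi> h (m, n) = lext h (\<lambda>p. tens (\<phi> (wmon (fst p))) (\<psi> (wmon (snd p)))) (m, n)" for m n
    by (simp add: tmap_def lext_def sum_fun_apply fsc_apply tens_apply supp_def mult.assoc)
  then show ?thesis by (auto simp: fun_eq_iff)
qed

lemma flinear_tmap: "flinear (tmap \<phi> \<psi>)"
  unfolding tmap_lext[abs_def] by (rule lext_linear)

lemma tmap_pmon: "tmap \<phi> \<psi> (pmon (u, v)) = tens (\<phi> (wmon u)) (\<psi> (wmon v))"
  by (simp add: tmap_lext)

lemma finsupp_tmap[intro]:
  "(\<And>w. \<phi> (wmon w) \<in> finsupp) \<Longrightarrow> (\<And>w. \<psi> (wmon w) \<in> finsupp) \<Longrightarrow> tmap \<phi> \<psi> h \<in> finsupp"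
  unfolding tmap_lext by (rule lext_finsupp) auto

lemma flinear_tens_left: "y \<in> finsupp \<Longrightarrow> flinear (\<lambda>x. tens x y)"
  by (simp add: flinear_def tens_lin)
lemma flinear_tens_right: "flinear (\<lambda>y. tens x y)"
  by (simp add: flinear_def tens_lin)

lemma flinear_comp: "flinear \<phi> \<Longrightarrow> flinear \<psi> \<Longrightarrow> (\<And>f. f \<in> finsupp \<Longrightarrow> \<psi> f \<in> finsupp) \<Longrightarrow> flinear (\<lambda>f. \<phi> (\<psi> f))"
  unfolding flinear_def by (simp add: finsupp_fsc)

lemma tmap_tens:
  assumes \<phi>: "flinear \<phi>" and \<psi>: "flinear \<psi>" and x: "x \<in> finsupp" and y: "y \<in> finsupp"
  shows "tmap \<phi> \<psi> (tens x y) = tens (\<phi> x) (\<psi> y)"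
proof -
  have 1: "tmap \<phi> \<psi> (tens (pmon u) y) = tens (\<phi> (pmon u)) (\<psi> y)" for u
  proof (rule flinear_eqI[OF _ _ _ y, where \<phi>="\<lambda>y. tmap \<phi> \<psi> (tens (pmon u) y)"])
    show "flinear (\<lambda>y. tmap \<phi> \<psi> (tens (pmon u) y))"
      by (rule flinear_comp[OF flinear_tmap flinear_tens_right]) auto
    show "flinear (\<lambda>a. tens (\<phi> (pmon u)) (\<psi> a))"
      using \<psi> unfolding flinear_def by (simp add: tens_lin)
    show "tmap \<phi> \<psi> (tens (pmon u) (pmon v)) = tens (\<phi> (pmon u)) (\<psi> (pmon v))" for v
      by (simp add: tens_pmon tmap_pmon wmon_pmon)
  qed
  show ?thesis
  proof (rule flinear_eqI[OF _ _ _ x, where \<phi>="\<lambda>x. tmap \<phi> \<psi> (tens x y)"])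
    show "flinear (\<lambda>x. tmap \<phi> \<psi> (tens x y))"
      by (rule flinear_comp[OF flinear_tmap flinear_tens_left[OF y]]) (use y in auto)
    show "flinear (\<lambda>a. tens (\<phi> a) (\<psi> y))"
      using \<phi> unfolding flinear_def by (simp add: tens_lin)
  qed (rule 1)
qed

lemma tmul_add_right': "tmul H (K + K') = tmul H K + tmul H K'" by (rule tmul_add_right)
lemma flinear_tmul_right: "flinear (tmul H)"
  by (simp add: flinear_def tmul_add_right tmul_fsc_right)
lemma flinear_tmul_left: "flinear (\<lambda>H. tmul H K)"
  by (simp add: flinear_def tmul_add_left tmul_fsc_left)
lemma tmul_zero_right[simp]: "tmul H 0 = 0"
  by (simp add: tmul_def fun_eq_iff fun_applys)

lemma tmap_fmul:
  assumes z: "z \<in> finsupp" and h: "h \<in> finsupp"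
  shows "tmap (fmul z) (fmul z) h = tmul (tens z z) h"
proof (rule flinear_eqI[OF flinear_tmap flinear_tmul_right _ h])
  fix p show "tmap (fmul z) (fmul z) (pmon p) = tmul (tens z z) (pmon p)"
    by (cases p) (simp only: tmap_pmon, simp add: tens_pmon[symmetric] tmul_tens wmon_pmon)
qed

lemma tmap_comp:
  assumes F: "flinear F" and G: "flinear G" and Ff: "\<And>f. f \<in> finsupp \<Longrightarrow> F f \<in> finsupp"
    and h: "h \<in> finsupp"
  shows "tmap G G (tmap F F h) = tmap (\<lambda>f. G (F f)) (\<lambda>f. G (F f)) h"
proof (rule flinear_eqI[OF _ flinear_tmap _ h, where \<phi>="\<lambda>h. tmap G G (tmap F F h)"])
  show "flinear (\<lambda>h. tmap G G (tmap F F h))"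
    by (rule flinear_comp[OF flinear_tmap flinear_tmap]) (auto intro!: finsupp_tmap Ff)
  fix p show "tmap G G (tmap F F (pmon p)) = tmap (\<lambda>f. G (F f)) (\<lambda>f. G (F f)) (pmon p)"
    by (cases p) (simp add: tmap_pmon tmap_tens[OF G G] Ff)
qed

lemma tsub_gens_finsupp: "J \<subseteq> finsupp \<Longrightarrow>
   {tens x y | x y. x \<in> J \<and> y \<in> finsupp} \<union> {tens x y | x y. x \<in> finsupp \<and> y \<in> J} \<subseteq> finsupp"
  by auto

lemma tsub_finsupp: "J \<subseteq> finsupp \<Longrightarrow> H \<in> tsub J \<Longrightarrow> H \<in> finsupp"
  unfolding tsub_def using lspan_finsupp[OF tsub_gens_finsupp] by blast

lemma tsub_add: "H \<in> tsub J \<Longrightarrow> K \<in> tsub J \<Longrightarrow> H + K \<in> tsub J"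
  unfolding tsub_def by (rule lspan_add)
lemma tsub_diff: "H \<in> tsub J \<Longrightarrow> K \<in> tsub J \<Longrightarrow> H - K \<in> tsub J"
  unfolding tsub_def by (rule lspan_diff)
lemma tsub_uminus: "H \<in> tsub J \<Longrightarrow> - H \<in> tsub J"
  unfolding tsub_def by (rule lspan_uminus)
lemma tsub_fsc: "H \<in> tsub J \<Longrightarrow> fsc c H \<in> tsub J"
  unfolding tsub_def by (rule lspan_scale)
lemma tsub_zero: "0 \<in> tsub J"
  unfolding tsub_def by (rule lspan_zero)
lemma tsub_left: "x \<in> J \<Longrightarrow> y \<in> finsupp \<Longrightarrow> tens x y \<in> tsub J"
  unfolding tsub_def by (rule lspan_base) blast
lemma tsub_right: "x \<in> finsupp \<Longrightarrow> y \<in> J \<Longrightarrow> tens x y \<in> tsub J"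
  unfolding tsub_def by (rule lspan_base) blast

lemma tsub_tmul:
  assumes JF: "J \<subseteq> finsupp" and Jr: "\<And>j y. j \<in> J \<Longrightarrow> y \<in> finsupp \<Longrightarrow> fmul j y \<in> J"
    and H: "H \<in> tsub J" and K: "K \<in> finsupp"
  shows "tmul H K \<in> tsub J"
proof -
  have gen: "tmul (tens x y) K \<in> tsub J" if xy: "(x \<in> J \<and> y \<in> finsupp) \<or> (x \<in> finsupp \<and> y \<in> J)" for x y
    using K
  proof (induction rule: finsupp_induct)
    case zero then show ?case by (simp add: tsub_zero)
  next
    case (add p c g)
    obtain u v where p: "p = (u, v)" by (cases p)
    have "tmul (tens x y) (fsc c (pmon p) + g) = fsc c (tens (fmul x (wmon u)) (fmul y (wmon v))) + tmul (tens x y) g"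
      by (simp add: p tmul_add_right tmul_fsc_right tens_pmon[symmetric] tmul_tens wmon_pmon)
    moreover have "tens (fmul x (wmon u)) (fmul y (wmon v)) \<in> tsub J"
      using xy
    proof
      assume "x \<in> J \<and> y \<in> finsupp"
      then show ?thesis using JF by (intro tsub_left Jr finsupp_fmul) auto
    next
      assume "x \<in> finsupp \<and> y \<in> J"
      then show ?thesis using JF by (intro tsub_right Jr finsupp_fmul) auto
    qed
    ultimately show ?case using add by (simp add: tsub_add tsub_fsc)
  qed
  have "(\<lambda>H. tmul H K) H \<in> tsub J"
    unfolding tsub_def
    by (rule lspan_image[OF tsub_gens_finsupp[OF JF] flinear_tmul_left _ H[unfolded tsub_def]])
       (use gen in \<open>auto simp: tsub_def\<close>)
  then show ?thesis by simp
qed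

lemma tmap_tsub:
  assumes G: "flinear G" and Gf: "\<And>f. f \<in> finsupp \<Longrightarrow> G f \<in> finsupp"
    and JF: "J \<subseteq> finsupp" and GJ: "\<And>j. j \<in> J \<Longrightarrow> G j \<in> J'"
    and H: "H \<in> tsub J"
  shows "tmap G G H \<in> tsub J'"
  unfolding tsub_def
proof (rule lspan_image[OF tsub_gens_finsupp[OF JF] flinear_tmap _ H[unfolded tsub_def]])
  fix z assume "z \<in> {tens x y |x y. x \<in> J \<and> y \<in> finsupp} \<union> {tens x y |x y. x \<in> finsupp \<and> y \<in> J}"
  then obtain x y where z: "z = tens x y" and xy: "(x \<in> J \<and> y \<in> finsupp) \<or> (x \<in> finsupp \<and> y \<in> J)" by blast
  have "tmap G G z = tens (G x) (G y)" using xy JF by (auto simp: z intro!: tmap_tens G)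
  moreover have "tens (G x) (G y) \<in> lspan ({tens x y |x y. x \<in> J' \<and> y \<in> finsupp} \<union> {tens x y |x y. x \<in> finsupp \<and> y \<in> J'})"
    using xy
  proof
    assume "x \<in> J \<and> y \<in> finsupp"
    then show ?thesis by (intro lspan_base) (blast intro: GJ Gf)
  next
    assume "x \<in> finsupp \<and> y \<in> J"
    then show ?thesis by (intro lspan_base) (blast intro: GJ Gf)
  qed
  ultimately show "tmap G G z \<in> lspan ({tens x y |x y. x \<in> J' \<and> y \<in> finsupp} \<union> {tens x y |x y. x \<in> finsupp \<and> y \<in> J'})"
    by simp
qed

lemma feps_superset: "finite S \<Longrightarrow> supp f \<subseteq> S \<Longrightarrow> feps f = (\<Sum>w\<in>S. f w * weps w)"
  unfolding feps_def supp_def[symmetric]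
  by (rule sum.mono_neutral_left) (auto simp: supp_def)

lemma feps_add: "f \<in> finsupp \<Longrightarrow> g \<in> finsupp \<Longrightarrow> feps (f + g) = feps f + feps g"
proof -
  assume f: "f \<in> finsupp" and g: "g \<in> finsupp"
  let ?S = "supp f \<union> supp g"
  have fin: "finite ?S" using f g by (simp add: finsupp_iff)
  have s: "supp (f + g) \<subseteq> ?S" "supp f \<subseteq> ?S" "supp g \<subseteq> ?S" by (auto simp: supp_def fun_applys)
  show ?thesis
    by (simp add: feps_superset[OF fin s(1)] feps_superset[OF fin s(2)] feps_superset[OF fin s(3)]
        fun_applys sum.distrib distrib_right)
qed

lemma feps_fsc: "f \<in> finsupp \<Longrightarrow> feps (fsc c f) = c * feps f"
proof -
  assume f: "f \<in> finsupp"
  have fin: "finite (supp f)" using f by (simp add: finsupp_iff)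
  have s: "supp (fsc c f) \<subseteq> supp f" by (auto simp: supp_def fsc_apply)
  show ?thesis
    by (simp add: feps_superset[OF fin s] feps_superset[OF fin order_refl] fsc_apply sum_distrib_left mult.assoc)
qed

lemma feps_zero[simp]: "feps 0 = 0" by (simp add: feps_def fun_applys)

lemma feps_wmon: "feps (wmon w) = weps w"
  by (subst feps_superset[of "{w}"]) (auto simp: supp_def wmon_def)

lemma weps_append: "weps (u @ v) = weps u * weps v"
  by (auto simp: weps_def)

lemma feps_fmul:
  assumes f: "f \<in> finsupp" and g: "g \<in> finsupp"
  shows "feps (fmul f g) = feps f * feps g"
proof -
  have w: "feps (fmul (wmon u) g) = weps u * feps g" for u
    using g
  proof (induction rule: finsupp_induct)
    case zero then show ?case by simp
  next
    case (add x c h)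
    then show ?case
      by (simp add: fmul_add_right fmul_fsc_right feps_add feps_fsc finsupp_fmul wmon_pmon[symmetric]
          fmul_wmon feps_wmon weps_append finsupp_fsc algebra_simps)
  qed
  show ?thesis using f
  proof (induction rule: finsupp_induct)
    case zero then show ?case by simp
  next
    case (add x c h)
    then show ?case using g
      by (simp add: fmul_add_left fmul_fsc_left feps_add feps_fsc finsupp_fmul wmon_pmon[symmetric]
          w feps_wmon finsupp_fsc algebra_simps)
  qed
qed

lemma feps_ystep: "feps (ystep B) = 1"
  unfolding ystep_def gD_def gB_def
  by (simp add: feps_add[symmetric] feps_fsc[symmetric] feps_wmon weps_def diff_conv_add_uminus
       fsc_minus1[symmetric] fsc_fsc finsupp_fsc feps_add feps_fsc)

lemma feps_fone: "feps fone = 1"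
  by (simp add: fone_def feps_wmon weps_def)

section \<open>Isomorphisms given by left multiplication\<close>

lemma pair_iso:
  assumes x: "x \<in> finsupp" and x': "x' \<in> finsupp"
    and xJ: "\<And>j. j \<in> Jc q \<sigma> \<pi> \<Longrightarrow> fmul x j \<in> Jc q \<sigma>' \<pi>'"
    and x'J: "\<And>j. j \<in> Jc q \<sigma>' \<pi>' \<Longrightarrow> fmul x' j \<in> Jc q \<sigma> \<pi>"
    and inv1: "fmul x' x - fone \<in> Jc q \<sigma> \<pi>"
    and inv2: "fmul x x' - fone \<in> Jc q \<sigma>' \<pi>'"
    and gl: "fcomult x - tens x x \<in> tsub (Jc q \<sigma>' \<pi>')"
    and eps: "feps x = 1"
  shows "coalg_iso_map (Jc q \<sigma> \<pi>) (Jc q \<sigma>' \<pi>') (fmul x) \<and> rmod_map (Jc q \<sigma>' \<pi>') (fmul x)"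
proof -
  let ?J = "Jc q \<sigma> \<pi>" and ?J' = "Jc q \<sigma>' \<pi>'"
  have iff: "fmul x f \<in> ?J' \<longleftrightarrow> f \<in> ?J" if f: "f \<in> finsupp" for f
  proof
    assume h: "fmul x f \<in> ?J'"
    have a: "fmul x' (fmul x f) \<in> ?J" using x'J[OF h] .
    have b: "fmul (fmul x' x - fone) f \<in> ?J" using J_right[OF inv1 f] .
    have "fmul (fmul x' x - fone) f = fmul x' (fmul x f) - f"
      using x x' f by (simp add: fmul_diff_left fmul_assoc)
    then have "f = fmul x' (fmul x f) - fmul (fmul x' x - fone) f" by simp
    then show "f \<in> ?J" using J_diff[OF a b] by simp
  next
    assume "f \<in> ?J" then show "fmul x f \<in> ?J'" by (rule xJ)
  qed
  have surj: "\<exists>f\<in>finsupp. g - fmul x f \<in> ?J'" if g: "g \<in> finsupp" for g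
  proof (intro bexI)
    have "g - fmul x (fmul x' g) = - fmul (fmul x x' - fone) g"
      using x x' g by (simp add: fmul_diff_left fmul_assoc)
    then show "g - fmul x (fmul x' g) \<in> ?J'" using J_uminus[OF J_right[OF inv2 g]] by simp
    show "fmul x' g \<in> finsupp" using x' g by auto
  qed
  have JF': "?J' \<subseteq> finsupp" using Jc_finsupp by blast
  have del: "tmap (fmul x) (fmul x) (fcomult f) - fcomult (fmul x f) \<in> tsub ?J'" if f: "f \<in> finsupp" for f
  proof -
    have "tmap (fmul x) (fmul x) (fcomult f) - fcomult (fmul x f) = - tmul (fcomult x - tens x x) (fcomult f)"
      using x f by (simp add: tmap_fmul fcomult_fmul tmul_diff_left finsupp_fcomult)
    moreover have "tmul (fcomult x - tens x x) (fcomult f) \<in> tsub ?J'"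
      by (rule tsub_tmul[OF JF' J_right gl finsupp_fcomult[OF f]])
    ultimately show ?thesis by (simp add: tsub_uminus)
  qed
  have ep: "feps (fmul x f) = feps f" if f: "f \<in> finsupp" for f
    using feps_fmul[OF x f] eps by simp
  have rm: "rmod_map ?J' (fmul x)"
    unfolding rmod_map_def using x by (simp add: fmul_assoc J_zero)
  show ?thesis
    unfolding coalg_iso_map_def using iff surj del ep rm flinear_fmul_right x
    by (auto intro: finsupp_fmul)
qed

lemma iso_comp:
  assumes F: "coalg_iso_map (Jc q \<sigma>1 \<pi>1) (Jc q \<sigma>2 \<pi>2) F"
    and G: "coalg_iso_map (Jc q \<sigma>2 \<pi>2) (Jc q \<sigma>3 \<pi>3) G"
  shows "coalg_iso_map (Jc q \<sigma>1 \<pi>1) (Jc q \<sigma>3 \<pi>3) (\<lambda>f. G (F f))"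
proof -
  let ?J1 = "Jc q \<sigma>1 \<pi>1" and ?J2 = "Jc q \<sigma>2 \<pi>2" and ?J3 = "Jc q \<sigma>3 \<pi>3"
  have Fl: "flinear F" and Ff: "\<And>f. f \<in> finsupp \<Longrightarrow> F f \<in> finsupp"
    and Fi: "\<And>f. f \<in> finsupp \<Longrightarrow> F f \<in> ?J2 \<longleftrightarrow> f \<in> ?J1"
    and Fs: "\<And>g. g \<in> finsupp \<Longrightarrow> \<exists>f\<in>finsupp. g - F f \<in> ?J2"
    and Fd: "\<And>f. f \<in> finsupp \<Longrightarrow> tmap F F (fcomult f) - fcomult (F f) \<in> tsub ?J2"
    and Fe: "\<And>f. f \<in> finsupp \<Longrightarrow> feps (F f) = feps f"
    using F unfolding coalg_iso_map_def by blast+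
  have Gl: "flinear G" and Gf: "\<And>f. f \<in> finsupp \<Longrightarrow> G f \<in> finsupp"
    and Gi: "\<And>f. f \<in> finsupp \<Longrightarrow> G f \<in> ?J3 \<longleftrightarrow> f \<in> ?J2"
    and Gs: "\<And>g. g \<in> finsupp \<Longrightarrow> \<exists>f\<in>finsupp. g - G f \<in> ?J3"
    and Gd: "\<And>f. f \<in> finsupp \<Longrightarrow> tmap G G (fcomult f) - fcomult (G f) \<in> tsub ?J3"
    and Ge: "\<And>f. f \<in> finsupp \<Longrightarrow> feps (G f) = feps f"
    using G unfolding coalg_iso_map_def by blast+
  have lin: "flinear (\<lambda>f. G (F f))" by (rule flinear_comp[OF Gl Fl Ff])
  have surj: "\<exists>f\<in>finsupp. g - G (F f) \<in> ?J3" if g: "g \<in> finsupp" for g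
  proof -
    obtain h where h: "h \<in> finsupp" "g - G h \<in> ?J3" using Gs[OF g] by blast
    obtain f where f: "f \<in> finsupp" "h - F f \<in> ?J2" using Fs[OF h(1)] by blast
    have "G (h - F f) \<in> ?J3" using Gi[of "h - F f"] f h Ff by auto
    moreover have "G (h - F f) = G h - G (F f)" using flinear_diff[OF Gl h(1) Ff[OF f(1)]] .
    ultimately have m: "G h - G (F f) \<in> ?J3" by simp
    have "(g - G h) + (G h - G (F f)) \<in> ?J3" by (rule J_add[OF h(2) m])
    moreover have "(g - G h) + (G h - G (F f)) = g - G (F f)" by simp
    ultimately show ?thesis using f(1) by auto
  qed
  have del: "tmap (\<lambda>f. G (F f)) (\<lambda>f. G (F f)) (fcomult f) - fcomult (G (F f)) \<in> tsub ?J3"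
    if f: "f \<in> finsupp" for f
  proof -
    have d1: "tmap G G (tmap F F (fcomult f) - fcomult (F f)) \<in> tsub ?J3"
      by (rule tmap_tsub[OF Gl Gf _ _ Fd[OF f]]) (use Jc_finsupp Gi in blast)+
    have fin1: "tmap F F (fcomult f) \<in> finsupp" using Ff by (auto intro!: finsupp_tmap)
    have fin2: "fcomult (F f) \<in> finsupp" using Ff[OF f] by auto
    have "tmap G G (tmap F F (fcomult f) - fcomult (F f)) = tmap G G (tmap F F (fcomult f)) - tmap G G (fcomult (F f))"
      by (rule flinear_diff[OF flinear_tmap fin1 fin2])
    also have "tmap G G (tmap F F (fcomult f)) = tmap (\<lambda>f. G (F f)) (\<lambda>f. G (F f)) (fcomult f)"
      by (rule tmap_comp[OF Fl Gl Ff finsupp_fcomult[OF f]])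
    finally have "tmap (\<lambda>f. G (F f)) (\<lambda>f. G (F f)) (fcomult f) - tmap G G (fcomult (F f)) \<in> tsub ?J3"
      using d1 by simp
    from tsub_add[OF this Gd[OF Ff[OF f]]] show ?thesis by simp
  qed
  show ?thesis
    unfolding coalg_iso_map_def using lin surj del Ff Gf Fi Gi Fe Ge by auto
qed

lemma rmod_comp:
  assumes F: "coalg_iso_map (Jc q \<sigma>1 \<pi>1) (Jc q \<sigma>2 \<pi>2) F"
    and G: "coalg_iso_map (Jc q \<sigma>2 \<pi>2) (Jc q \<sigma>3 \<pi>3) G"
    and RF: "rmod_map (Jc q \<sigma>2 \<pi>2) F" and RG: "rmod_map (Jc q \<sigma>3 \<pi>3) G"
  shows "rmod_map (Jc q \<sigma>3 \<pi>3) (\<lambda>f. G (F f))"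
  unfolding rmod_map_def
proof (intro ballI)
  let ?J2 = "Jc q \<sigma>2 \<pi>2" and ?J3 = "Jc q \<sigma>3 \<pi>3"
  fix f g :: fa assume f: "f \<in> finsupp" and g: "g \<in> finsupp"
  have Fl: "flinear F" and Ff: "\<And>f. f \<in> finsupp \<Longrightarrow> F f \<in> finsupp"
    using F unfolding coalg_iso_map_def by blast+
  have Gl: "flinear G" and Gf: "\<And>f. f \<in> finsupp \<Longrightarrow> G f \<in> finsupp"
    and Gi: "\<And>f. f \<in> finsupp \<Longrightarrow> G f \<in> ?J3 \<longleftrightarrow> f \<in> ?J2"
    using G unfolding coalg_iso_map_def by blast+
  have fg: "fmul f g \<in> finsupp" using f g by auto
  have a: "F (fmul f g) - fmul (F f) g \<in> ?J2" using RF f g unfolding rmod_map_def by blast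
  have afin: "F (fmul f g) - fmul (F f) g \<in> finsupp" using Ff[OF fg] Ff[OF f] g by auto
  have b: "G (fmul (F f) g) - fmul (G (F f)) g \<in> ?J3" using RG Ff[OF f] g unfolding rmod_map_def by blast
  have "G (F (fmul f g) - fmul (F f) g) \<in> ?J3" using Gi[OF afin] a by blast
  moreover have "G (F (fmul f g) - fmul (F f) g) = G (F (fmul f g)) - G (fmul (F f) g)"
    by (rule flinear_diff[OF Gl Ff[OF fg]]) (use Ff[OF f] g in auto)
  ultimately have m: "G (F (fmul f g)) - G (fmul (F f) g) \<in> ?J3" by simp
  have "(G (F (fmul f g)) - G (fmul (F f) g)) + (G (fmul (F f) g) - fmul (G (F f)) g) \<in> ?J3"
    by (rule J_add[OF m b])
  moreover have "(G (F (fmul f g)) - G (fmul (F f) g)) + (G (fmul (F f) g) - fmul (G (F f)) g)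
     = G (F (fmul f g)) - fmul (G (F f)) g" by simp
  ultimately show "G (F (fmul f g)) - fmul (G (F f)) g \<in> ?J3" by simp
qed

lemma step_iso:
  assumes q: "q \<noteq> 0" and s: "\<sigma> = B + B'" and p: "\<pi> = B * B'" and s': "\<sigma>' = B / q + B' * q"
  shows "coalg_iso_map (Jc q \<sigma>' \<pi>) (Jc q \<sigma> \<pi>) (fmul (ystep B)) \<and> rmod_map (Jc q \<sigma> \<pi>) (fmul (ystep B))"
proof (rule pair_iso[where x'="ystep (B' * q)"])
  show "ystep B \<in> finsupp" "ystep (B' * q) \<in> finsupp" by auto
  show "fmul (ystep B) j \<in> Jc q \<sigma> \<pi>" if "j \<in> Jc q \<sigma>' \<pi>" for j
    using step_J[OF q, of j B B'] that s p s' by simp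
  have e1: "B' * q / q + B / q * q = B + B'" "B' * q * (B / q) = B * B'" "B' * q + B / q = B / q + B' * q" "B' * B = B * B'"
    using q by (simp_all add: field_simps)
  show "fmul (ystep (B' * q)) j \<in> Jc q \<sigma>' \<pi>" if "j \<in> Jc q \<sigma> \<pi>" for j
    using step_J[OF q, of j "B' * q" "B / q"] that s p s' e1 by simp
  show "fmul (ystep (B' * q)) (ystep B) - fone \<in> Jc q \<sigma>' \<pi>"
    using step_inv[OF q, of "B' * q" "B / q"] s p s' e1 q by simp
  show "fmul (ystep B) (ystep (B' * q)) - fone \<in> Jc q \<sigma> \<pi>"
    using step_inv[OF q, of B B'] s p by simp
  show "fcomult (ystep B) - tens (ystep B) (ystep B) \<in> tsub (Jc q \<sigma> \<pi>)"
    unfolding grouplike_ystep[of B B']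
    by (rule tsub_left) (use s p in \<open>auto intro!: J_diff J_fsc J_g1[of fone, simplified] J_g2[of fone, simplified]\<close>)
  show "feps (ystep B) = 1" by (rule feps_ystep)
qed

lemma fcomult_fone: "fcomult fone = tens fone fone"
proof -
  have "fcomult fone (u, v) = tens fone fone (u, v)" for u v
  proof (cases "compat u v")
    case True
    then have "length u = length v" by (rule compat_len)
    then show ?thesis using True by (auto simp: fcomult_apply fone_def wmon_def tens_apply length_mrg mrg_def
        dest: arg_cong[where f=length])
  next
    case False
    then have "\<not> (u = [] \<and> v = [])" by (auto simp: compat_def)
    then show ?thesis using False by (auto simp: fcomult_apply fone_def wmon_def tens_apply)
  qed
  then show ?thesis by (auto simp: fun_eq_iff)
qed

lemma id_iso: "coalg_iso_map (Jc q \<sigma> \<pi>) (Jc q \<sigma> \<pi>) (fmul fone) \<and> rmod_map (Jc q \<sigma> \<pi>) (fmul fone)"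
  by (rule pair_iso[where x'=fone]) (auto simp: J_zero fcomult_fone tsub_zero feps_fone)

section \<open>Chains of steps\<close>

definition LB :: "complex \<Rightarrow> complex \<Rightarrow> int \<Rightarrow> complex" where "LB \<beta> q k = \<beta> * q powi (- k)"
definition LB' :: "complex \<Rightarrow> complex \<Rightarrow> int \<Rightarrow> complex" where "LB' \<beta> q k = \<beta> * q powi k"

lemma LB_succ: "q \<noteq> 0 \<Longrightarrow> LB \<beta> q (k + 1) = LB \<beta> q k / q"
proof -
  assume q: "q \<noteq> 0"
  have "- (k + 1) = - k - 1" by simp
  then show ?thesis unfolding LB_def using power_int_diff[of q "-k" 1] q by simp
qed
lemma LB'_succ: "q \<noteq> 0 \<Longrightarrow> LB' \<beta> q (k + 1) = LB' \<beta> q k * q"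
  unfolding LB'_def by (simp add: power_int_add_1)
lemma LB_prod: "q \<noteq> 0 \<Longrightarrow> LB \<beta> q k * LB' \<beta>' q k = \<beta> * \<beta>'"
  unfolding LB_def LB'_def using power_int_add[of q "-k" k] by (simp add: algebra_simps)
lemma LB_0[simp]: "LB \<beta> q 0 = \<beta>" "LB' \<beta> q 0 = \<beta>" by (simp_all add: LB_def LB'_def)

lemma level_chain:
  assumes q: "q \<noteq> 0"
  shows "\<exists>F. coalg_iso_map (Jc q (\<beta> + \<beta>') (\<beta> * \<beta>')) (Jc q (LB \<beta> q k + LB' \<beta>' q k) (\<beta> * \<beta>')) F
           \<and> rmod_map (Jc q (LB \<beta> q k + LB' \<beta>' q k) (\<beta> * \<beta>')) F"
proof (induction k rule: int_induct[where k=0])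
  case base
  show ?case using id_iso by auto
next
  case (step1 i)
  then obtain F where F: "coalg_iso_map (Jc q (\<beta> + \<beta>') (\<beta> * \<beta>')) (Jc q (LB \<beta> q i + LB' \<beta>' q i) (\<beta> * \<beta>')) F"
    "rmod_map (Jc q (LB \<beta> q i + LB' \<beta>' q i) (\<beta> * \<beta>')) F" by blast
  have G: "coalg_iso_map (Jc q (LB \<beta> q i + LB' \<beta>' q i) (\<beta> * \<beta>')) (Jc q (LB \<beta> q (i+1) + LB' \<beta>' q (i+1)) (\<beta> * \<beta>'))
      (fmul (ystep (LB' \<beta>' q (i+1)))) \<and> rmod_map (Jc q (LB \<beta> q (i+1) + LB' \<beta>' q (i+1)) (\<beta> * \<beta>')) (fmul (ystep (LB' \<beta>' q (i+1))))"
    by (rule step_iso[OF q, where B'="LB \<beta> q (i+1)"])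
       (use q in \<open>simp_all add: LB_succ LB'_succ LB_prod[symmetric] mult.commute\<close>)
  show ?case using iso_comp[OF F(1) conjunct1[OF G]] rmod_comp[OF F(1) conjunct1[OF G] F(2) conjunct2[OF G]] by blast
next
  case (step2 i)
  then obtain F where F: "coalg_iso_map (Jc q (\<beta> + \<beta>') (\<beta> * \<beta>')) (Jc q (LB \<beta> q i + LB' \<beta>' q i) (\<beta> * \<beta>')) F"
    "rmod_map (Jc q (LB \<beta> q i + LB' \<beta>' q i) (\<beta> * \<beta>')) F" by blast
  have e: "i = (i - 1) + 1" by simp
  have G: "coalg_iso_map (Jc q (LB \<beta> q i + LB' \<beta>' q i) (\<beta> * \<beta>')) (Jc q (LB \<beta> q (i-1) + LB' \<beta>' q (i-1)) (\<beta> * \<beta>'))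
      (fmul (ystep (LB \<beta> q (i-1)))) \<and> rmod_map (Jc q (LB \<beta> q (i-1) + LB' \<beta>' q (i-1)) (\<beta> * \<beta>')) (fmul (ystep (LB \<beta> q (i-1))))"
    by (rule step_iso[OF q, where B'="LB' \<beta>' q (i-1)"])
       (use q in \<open>simp_all add: LB_prod LB_succ[of q \<beta> "i - 1", simplified] LB'_succ[of q \<beta>' "i - 1", simplified]\<close>)
  show ?case using iso_comp[OF F(1) conjunct1[OF G]] rmod_comp[OF F(1) conjunct1[OF G] F(2) conjunct2[OF G]] by blast
qed

section \<open>Scaling automorphism\<close>

definition scw :: "complex \<Rightarrow> gen list \<Rightarrow> complex" where
  "scw t w = prod_list (map (\<lambda>x. t powi (int (gcol x) - int (grow x))) w)"
definition scal :: "complex \<Rightarrow> fa \<Rightarrow> fa" where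
  "scal t f = (\<lambda>w. scw t w * f w)"

lemma scw_append: "scw t (u @ v) = scw t u * scw t v" by (simp add: scw_def)
lemma scw_Nil[simp]: "scw t [] = 1" by (simp add: scw_def)
lemma scw_Cons: "scw t (x # w) = t powi (int (gcol x) - int (grow x)) * scw t w" by (simp add: scw_def)

lemma scal_fmul: "scal t (fmul f g) = fmul (scal t f) (scal t g)"
proof -
  have "scw t w = scw t (take k w) * scw t (drop k w)" for k w
    by (metis append_take_drop_id scw_append)
  then show ?thesis
    by (auto simp: scal_def fmul_def fun_eq_iff sum_distrib_left mult_ac intro!: sum.cong)
qed

lemma scal_add: "scal t (f + g) = scal t f + scal t g" by (simp add: scal_def fun_eq_iff fun_applys algebra_simps)
lemma scal_diff: "scal t (f - g) = scal t f - scal t g" by (simp add: scal_def fun_eq_iff fun_applys algebra_simps)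
lemma scal_fsc: "scal t (fsc c f) = fsc c (scal t f)" by (simp add: scal_def fun_eq_iff fun_applys algebra_simps)
lemma scal_wmon: "scal t (wmon w) = fsc (scw t w) (wmon w)" by (simp add: scal_def fun_eq_iff fun_applys wmon_def)
lemma flinear_scal: "flinear (scal t)" by (simp add: flinear_def scal_add scal_fsc)
lemma finsupp_scal[intro]: "f \<in> finsupp \<Longrightarrow> scal t f \<in> finsupp"
  unfolding finsupp_def scal_def mem_Collect_eq by (rule rev_finite_subset) auto

lemma scal_gens: "scal t gA = gA" "scal t gB = fsc t gB" "scal t gC = fsc (inverse t) gC" "scal t gD = gD"
  "scal t fone = fone"
  by (simp_all add: gA_def gB_def gC_def gD_def fone_def scal_wmon scw_def power_int_minus)

lemma scal_scal: "t \<noteq> 0 \<Longrightarrow> scal (inverse t) (scal t f) = f"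
proof -
  assume t: "t \<noteq> 0"
  have "scw (inverse t) w * scw t w = 1" for w
    by (induction w) (simp_all add: scw_Cons power_int_inverse t field_simps power_int_not_zero)
  then show ?thesis by (simp add: scal_def fun_eq_iff mult.assoc[symmetric])
qed

lemma scal_rels: "t \<noteq> 0 \<Longrightarrow> r \<in> slq_rels q \<Longrightarrow> scal t r \<in> Jc q \<sigma> \<pi>"
proof -
  assume t: "t \<noteq> 0" and r: "r \<in> slq_rels q"
  have e: "scal t (rel1 q) = fsc t (rel1 q)" "scal t rel3 = rel3" "scal t (rel4 q) = fsc t (rel4 q)"
     "scal t (rel5 q) = fsc (inverse t) (rel5 q)" "scal t (rel6 q) = rel6 q" "scal t (rel7 q) = rel7 q"
    using t by (simp_all add: reldefs scal_diff scal_fmul scal_gens scal_fsc fmul_lin fsc_diff fsc_fsc mult.commute)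
  have "r \<in> {rel1 q, rel3, rel4 q, rel5 q, rel6 q, rel7 q} \<or> r = fmul gA gC - fsc q (fmul gC gA)"
    using r by (auto simp: slq_rels_def reldefs)
  moreover have "scal t (fmul gA gC - fsc q (fmul gC gA)) = fsc (inverse t) (fmul gA gC - fsc q (fmul gC gA))"
    using t by (simp add: scal_diff scal_fmul scal_gens scal_fsc fmul_lin fsc_diff fsc_fsc mult.commute)
  moreover have "fmul gA gC - fsc q (fmul gC gA) \<in> Jc q \<sigma> \<pi>" by (rule J_rel0) (simp add: slq_rels_def)
  ultimately show ?thesis using e rels_in_J[of q \<sigma> \<pi>] J_fsc by (auto simp del: fsc_1)
qed

lemma scal_g1: "scal t (g1 \<sigma>) = g1 (\<sigma> * t)"
  by (simp add: g1_def scal_add scal_diff scal_fsc scal_gens fsc_fsc mult.commute)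
lemma scal_g2: "t \<noteq> 0 \<Longrightarrow> scal t (g2 \<pi>) = fsc (inverse t) (g2 (\<pi> * t^2))"
  by (simp add: g2_def scal_add scal_fsc scal_gens fsc_fsc fsc_add power2_eq_square field_simps)

lemma scal_J:
  assumes t: "t \<noteq> 0" and j: "j \<in> Jc q \<sigma> \<pi>"
  shows "scal t j \<in> Jc q (\<sigma> * t) (\<pi> * t^2)"
proof -
  have "scal t j \<in> lspan (Rset q \<union> Cset (\<sigma> * t) (\<pi> * t^2))"
  proof (rule lspan_image[OF _ flinear_scal])
    show "Rset q \<union> Cset \<sigma> \<pi> \<subseteq> finsupp" using Rset_finsupp Cset_finsupp by blast
    show "j \<in> lspan (Rset q \<union> Cset \<sigma> \<pi>)" using j by (simp add: Jc_def)
  next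
    fix x assume "x \<in> Rset q \<union> Cset \<sigma> \<pi>"
    then show "scal t x \<in> lspan (Rset q \<union> Cset (\<sigma> * t) (\<pi> * t^2))"
    proof
      assume "x \<in> Rset q"
      then obtain a r b where x: "x = fmul (fmul a r) b" "r \<in> slq_rels q" "a \<in> finsupp" "b \<in> finsupp"
        by (auto simp: Rset_def)
      have "scal t r \<in> Jc q 0 0" using scal_rels[OF t x(2)] .
      have "scal t x = fmul (fmul (scal t a) (scal t r)) (scal t b)" by (simp add: x scal_fmul)
      moreover have "fmul (scal t a) (scal t r) \<in> Jc q (\<sigma> * t) (\<pi> * t^2) \<longrightarrow> True" by simp
      moreover have "fmul (fmul (scal t a) (scal t r)) (scal t b) \<in> Jc q (\<sigma> * t) (\<pi> * t^2)"
      proof -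
        have sr: "scal t r \<in> Jc q (\<sigma> * t) (\<pi> * t^2)" using scal_rels[OF t x(2)] .
        have "fmul (scal t a) (scal t r) \<in> Jc q (\<sigma> * t) (\<pi> * t^2)"
        proof -
          obtain c where c: "scal t r = fsc c r"
          proof -
            have "r \<in> {rel1 q, rel3, rel4 q, rel5 q, rel6 q, rel7 q} \<or> r = fmul gA gC - fsc q (fmul gC gA)"
              using x(2) by (auto simp: slq_rels_def reldefs)
            moreover have "scal t (rel1 q) = fsc t (rel1 q)" "scal t rel3 = fsc 1 rel3" "scal t (rel4 q) = fsc t (rel4 q)"
              "scal t (rel5 q) = fsc (inverse t) (rel5 q)" "scal t (rel6 q) = fsc 1 (rel6 q)" "scal t (rel7 q) = fsc 1 (rel7 q)"
              "scal t (fmul gA gC - fsc q (fmul gC gA)) = fsc (inverse t) (fmul gA gC - fsc q (fmul gC gA))"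
              using t by (simp_all add: reldefs scal_diff scal_fmul scal_gens scal_fsc fmul_lin fsc_diff fsc_fsc mult.commute)
            ultimately show ?thesis using that by blast
          qed
          have "fmul (scal t a) (scal t r) = fsc c (fmul (fmul (scal t a) r) fone)" by (simp add: c fmul_lin)
          then show ?thesis using J_rel[OF x(2) finsupp_scal[OF x(3)] finsupp_gens(5)] by (simp add: J_fsc)
        qed
        then show ?thesis using J_right finsupp_scal[OF x(4)] by blast
      qed
      ultimately show ?thesis by (simp add: Jc_def)
    next
      assume "x \<in> Cset \<sigma> \<pi>"
      then obtain c b where x: "x = fmul c b" "c \<in> {g1 \<sigma>, g2 \<pi>}" "b \<in> finsupp"
        by (auto simp: Cset_def)
      have "scal t x = fmul (scal t c) (scal t b)" by (simp add: x scal_fmul)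
      moreover have "fmul (scal t c) (scal t b) \<in> Jc q (\<sigma> * t) (\<pi> * t^2)"
        using x(2)
      proof
        assume "c = g1 \<sigma>"
        then show ?thesis using J_g1[OF finsupp_scal[OF x(3)]] by (simp add: scal_g1)
      next
        assume "c \<in> {g2 \<pi>}"
        then show ?thesis using J_g2[OF finsupp_scal[OF x(3)]] t by (simp add: scal_g2[OF t] fmul_fsc_left J_fsc)
      qed
      ultimately show ?thesis by (simp add: Jc_def)
    qed
  qed
  then show ?thesis by (simp add: Jc_def)
qed

lemma scw_letter:
  fixes t :: complex
  assumes t: "t \<noteq> 0" and c: "gcol x = grow y"
  shows "t powi (int (gcol (gent (grow x) (gcol y))) - int (grow (gent (grow x) (gcol y))))
       = t powi (int (gcol x) - int (grow x)) * t powi (int (gcol y) - int (grow y))"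
  using c t by (cases x; cases y) (simp_all add: gent_def power_int_minus)

lemma scw_mrg: "t \<noteq> 0 \<Longrightarrow> compat u v \<Longrightarrow> scw t (mrg u v) = scw t u * scw t v"
proof (induction u arbitrary: v)
  case Nil then show ?case by (simp add: compat_def mrg_def)
next
  case (Cons x u)
  then obtain y v' where v: "v = y # v'" by (cases v) (auto simp: compat_def)
  have c1: "gcol x = grow y" using Cons.prems(2) v by (auto simp: compat_def)
  have "compat u v'" unfolding compat_def
  proof
    show "length u = length v'" using Cons.prems(2) v by (simp add: compat_def)
    show "\<forall>i<length u. gcol (u ! i) = grow (v' ! i)"
    proof (intro allI impI)
      fix i assume "i < length u"
      then have "Suc i < length (x # u)" by simp
      moreover have "\<forall>j<length (x # u). gcol ((x # u) ! j) = grow (v ! j)" using Cons.prems(2) by (simp add: compat_def)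
      ultimately have "gcol ((x # u) ! Suc i) = grow (v ! Suc i)" by blast
      then show "gcol (u ! i) = grow (v' ! i)" using v by simp
    qed
  qed
  note c = c1 this
  have "mrg (x # u) v = gent (grow x) (gcol y) # mrg u v'" by (simp add: v mrg_def)
  then show ?case using Cons.IH[OF Cons.prems(1) c(2)] scw_letter[OF Cons.prems(1) c(1)]
    by (simp add: scw_Cons v mult_ac)
qed

lemma fcomult_scal: "t \<noteq> 0 \<Longrightarrow> fcomult (scal t f) (u, v) = scw t u * scw t v * fcomult f (u, v)"
  by (simp add: fcomult_apply scal_def scw_mrg)

lemma tmap_scal:
  assumes h: "h \<in> finsupp"
  shows "tmap (scal t) (scal t) h = (\<lambda>(u, v). scw t u * scw t v * h (u, v))"
proof (rule flinear_eqI[OF flinear_tmap _ _ h])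
  show "flinear (\<lambda>h. (\<lambda>(u, v). scw t u * scw t v * h (u, v)))"
    by (simp add: flinear_def fun_eq_iff fun_applys algebra_simps)
  fix p show "tmap (scal t) (scal t) (pmon p) = (\<lambda>(u, v). scw t u * scw t v * pmon p (u, v))"
    by (cases p) (simp only: tmap_pmon, auto simp: scal_def tens_def fun_eq_iff wmon_def pmon_def)
qed

lemma feps_scal:
  assumes f: "f \<in> finsupp"
  shows "feps (scal t f) = feps f"
proof -
  have fin: "finite (supp f)" using f by (simp add: finsupp_iff)
  have s: "supp (scal t f) \<subseteq> supp f" by (auto simp: supp_def scal_def)
  have w: "scw t w * weps w = weps w" for w
  proof (cases "\<forall>x\<in>set w. x = GA \<or> x = GD")
    case True
    then have "scw t w = 1" by (induction w) (auto simp: scw_Cons)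
    then show ?thesis by simp
  next
    case False
    then have "weps w = 0" by (auto simp: weps_def)
    then show ?thesis by simp
  qed
  have "feps (scal t f) = (\<Sum>w\<in>supp f. scal t f w * weps w)" by (rule feps_superset[OF fin s])
  also have "\<dots> = (\<Sum>w\<in>supp f. f w * weps w)" by (simp add: scal_def mult.assoc w mult.left_commute)
  also have "\<dots> = feps f" by (rule feps_superset[OF fin order_refl, symmetric])
  finally show ?thesis .
qed

lemma scal_iso:
  assumes t: "t \<noteq> 0"
  shows "coalg_iso_map (Jc q \<sigma> \<pi>) (Jc q (\<sigma> * t) (\<pi> * t^2)) (scal t)"
  unfolding coalg_iso_map_def
proof (intro conjI ballI)
  show "flinear (scal t)" by (rule flinear_scal)
  show "scal t ` finsupp \<subseteq> finsupp" by auto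
next
  fix f :: fa assume f: "f \<in> finsupp"
  show "scal t f \<in> Jc q (\<sigma> * t) (\<pi> * t^2) \<longleftrightarrow> f \<in> Jc q \<sigma> \<pi>"
  proof
    assume "scal t f \<in> Jc q (\<sigma> * t) (\<pi> * t^2)"
    from scal_J[OF _ this, of "inverse t"] t
    have "scal (inverse t) (scal t f) \<in> Jc q (\<sigma> * t * inverse t) (\<pi> * t^2 * (inverse t)^2)" by simp
    moreover have "\<sigma> * t * inverse t = \<sigma>" "\<pi> * t^2 * (inverse t)^2 = \<pi>" using t
      by (simp_all add: power2_eq_square field_simps)
    ultimately show "f \<in> Jc q \<sigma> \<pi>" using scal_scal[OF t, of f] by simp
  qed (rule scal_J[OF t])
  show "tmap (scal t) (scal t) (fcomult f) - fcomult (scal t f) \<in> tsub (Jc q (\<sigma> * t) (\<pi> * t^2))"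
  proof -
    have "tmap (scal t) (scal t) (fcomult f) = fcomult (scal t f)"
      using fcomult_scal[OF t, of f] tmap_scal[OF finsupp_fcomult[OF f], of t] by (auto simp: fun_eq_iff)
    then show ?thesis by (simp add: tsub_zero)
  qed
  show "feps (scal t f) = feps f" by (rule feps_scal[OF f])
next
  fix g :: fa assume g: "g \<in> finsupp"
  have "scal t (scal (inverse t) g) = g" using scal_scal[of "inverse t" g] t by simp
  then show "\<exists>f\<in>finsupp. g - scal t f \<in> Jc q (\<sigma> * t) (\<pi> * t^2)"
    using g by (intro bexI[of _ "scal (inverse t) g"]) (auto simp: J_zero)
qed

locale laur =
  fixes q \<beta> \<beta>' :: complex
  assumes q0: "q \<noteq> 0" and Dn0: "\<And>n. LB \<beta> q n \<noteq> LB' \<beta>' q n"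
begin

definition "B n = LB \<beta> q n"
definition "B' n = LB' \<beta>' q n"
definition "D n = B n - B' n"

fun Uc :: "gen \<Rightarrow> int \<Rightarrow> complex" where
  "Uc GA n = B n / D n" | "Uc GB n = - 1 / D n" | "Uc GC n = \<beta> * \<beta>' / D n" | "Uc GD n = - B' n / D n"
fun Lc :: "gen \<Rightarrow> int \<Rightarrow> complex" where
  "Lc GA n = - B' n / D n" | "Lc GB n = 1 / D n" | "Lc GC n = - (\<beta> * \<beta>') / D n" | "Lc GD n = B n / D n"

definition act :: "(int \<Rightarrow> complex) \<Rightarrow> gen \<Rightarrow> int \<Rightarrow> complex" where
  "act v g = (\<lambda>m. v (m - 1) * Uc g (m - 1) + v (m + 1) * Lc g (m + 1))"

lemma D0: "D n \<noteq> 0" using Dn0[of n] by (simp add: D_def B_def B'_def)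

lemma Bsh: "B (m - 1) = B m * q" "B (m - 2) = B m * q^2" "B (m + 1) = B m / q" "B (m + 2) = B m / q^2"
  "B' (m - 1) = B' m / q" "B' (m - 2) = B' m / q^2" "B' (m + 1) = B' m * q" "B' (m + 2) = B' m * q^2"
proof -
  have s: "B (k + 1) = B k / q" "B' (k + 1) = B' k * q" for k
    using LB_succ[OF q0] LB'_succ[OF q0] by (simp_all add: B_def B'_def)
  show "B (m - 1) = B m * q" using s(1)[of "m - 1"] q0 by (simp add: field_simps)
  show "B (m - 2) = B m * q^2" using s(1)[of "m - 2"] s(1)[of "m - 1"] q0 by (simp add: field_simps power2_eq_square)
  show "B (m + 1) = B m / q" using s(1)[of m] by simp
  show "B (m + 2) = B m / q^2" using s(1)[of "m + 1"] s(1)[of m] q0 by (simp add: field_simps power2_eq_square)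
  show "B' (m - 1) = B' m / q" using s(2)[of "m - 1"] q0 by (simp add: field_simps)
  show "B' (m - 2) = B' m / q^2" using s(2)[of "m - 2"] s(2)[of "m - 1"] q0 by (simp add: field_simps power2_eq_square)
  show "B' (m + 1) = B' m * q" using s(2)[of m] by simp
  show "B' (m + 2) = B' m * q^2" using s(2)[of "m + 1"] s(2)[of m] q0 by (simp add: field_simps power2_eq_square)
qed

lemma prodB: "B n * B' n = \<beta> * \<beta>'" using LB_prod[OF q0] by (simp add: B_def B'_def)

lemma Dsh: "D (m - 1) = B m * q - B' m / q" "D (m - 2) = B m * q^2 - B' m / q^2" "D m = B m - B' m"
  "D (m + 1) = B m / q - B' m * q" "D (m + 2) = B m / q^2 - B' m * q^2"
  by (simp_all add: D_def Bsh)

lemma Dsh': "D (1 + m) = B m / q - B' m * q" "D (2 + m) = B m / q^2 - B' m * q^2"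
  "D (-1 + m) = B m * q - B' m / q" "D (-2 + m) = B m * q^2 - B' m / q^2"
  using Dsh[of m] by (simp_all add: add.commute)

lemma Bsh': "B (1 + m) = B m / q" "B (2 + m) = B m / q^2" "B (-1 + m) = B m * q" "B (-2 + m) = B m * q^2"
  "B' (1 + m) = B' m * q" "B' (2 + m) = B' m * q^2" "B' (-1 + m) = B' m / q" "B' (-2 + m) = B' m / q^2"
  using Bsh[of m] by (simp_all add: add.commute)

definition "clow x y m = Uc x (m - 2) * Uc y (m - 1)"
definition "cmid x y m = Lc x m * Uc y (m - 1) + Uc x m * Lc y (m + 1)"
definition "chigh x y m = Lc x (m + 2) * Lc y (m + 1)"

lemma act2: "act (act v x) y m = v (m - 2) * clow x y m + v m * cmid x y m + v (m + 2) * chigh x y m"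
proof -
  have e: "m - 1 - 1 = m - 2" "m - 1 + 1 = m" "m + 1 - 1 = m" "m + 1 + 1 = m + 2" by simp_all
  show ?thesis unfolding act_def e clow_def cmid_def chigh_def by (simp add: algebra_simps)
qed

lemma dd: "D (m - 1) \<noteq> 0" "D (m - 2) \<noteq> 0" "D m \<noteq> 0" "D (m + 1) \<noteq> 0" "D (m + 2) \<noteq> 0"
  "D (1 + m) \<noteq> 0" "D (2 + m) \<noteq> 0" "D (-1 + m) \<noteq> 0" "D (-2 + m) \<noteq> 0" using D0 by auto

lemma clow_ab: "clow GA GB m = q * clow GB GA m"
  unfolding clow_def Uc.simps Lc.simps prodB[of m, symmetric] Bsh
  using dd[of m] q0 by (simp add: field_simps; simp add: Dsh Dsh' Bsh Bsh' field_simps power2_eq_square)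

lemma cmid_ab: "cmid GA GB m = q * cmid GB GA m"
  unfolding cmid_def Uc.simps Lc.simps prodB[of m, symmetric] Bsh
  using dd[of m] q0 by (simp add: field_simps; simp add: Dsh Dsh' Bsh Bsh' field_simps power2_eq_square)

lemma chigh_ab: "chigh GA GB m = q * chigh GB GA m"
  unfolding chigh_def Uc.simps Lc.simps prodB[of m, symmetric] Bsh
  using dd[of m] q0 by (simp add: field_simps; simp add: Dsh Dsh' Bsh Bsh' field_simps power2_eq_square)

lemma clow_ac: "clow GA GC m = q * clow GC GA m"
  unfolding clow_def Uc.simps Lc.simps prodB[of m, symmetric] Bsh
  using dd[of m] q0 by (simp add: field_simps; simp add: Dsh Dsh' Bsh Bsh' field_simps power2_eq_square)

lemma cmid_ac: "cmid GA GC m = q * cmid GC GA m"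
  unfolding cmid_def Uc.simps Lc.simps prodB[of m, symmetric] Bsh
  using dd[of m] q0 by (simp add: field_simps; simp add: Dsh Dsh' Bsh Bsh' field_simps power2_eq_square)

lemma chigh_ac: "chigh GA GC m = q * chigh GC GA m"
  unfolding chigh_def Uc.simps Lc.simps prodB[of m, symmetric] Bsh
  using dd[of m] q0 by (simp add: field_simps; simp add: Dsh Dsh' Bsh Bsh' field_simps power2_eq_square)

lemma clow_bc: "clow GB GC m = 1 * clow GC GB m"
  unfolding clow_def Uc.simps Lc.simps prodB[of m, symmetric] Bsh
  using dd[of m] q0 by (simp add: field_simps; simp add: Dsh Dsh' Bsh Bsh' field_simps power2_eq_square)

lemma cmid_bc: "cmid GB GC m = 1 * cmid GC GB m"
  unfolding cmid_def Uc.simps Lc.simps prodB[of m, symmetric] Bsh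
  using dd[of m] q0 by (simp add: field_simps; simp add: Dsh Dsh' Bsh Bsh' field_simps power2_eq_square)

lemma chigh_bc: "chigh GB GC m = 1 * chigh GC GB m"
  unfolding chigh_def Uc.simps Lc.simps prodB[of m, symmetric] Bsh
  using dd[of m] q0 by (simp add: field_simps; simp add: Dsh Dsh' Bsh Bsh' field_simps power2_eq_square)

lemma clow_bd: "clow GB GD m = q * clow GD GB m"
  unfolding clow_def Uc.simps Lc.simps prodB[of m, symmetric] Bsh
  using dd[of m] q0 by (simp add: field_simps; simp add: Dsh Dsh' Bsh Bsh' field_simps power2_eq_square)

lemma cmid_bd: "cmid GB GD m = q * cmid GD GB m"
  unfolding cmid_def Uc.simps Lc.simps prodB[of m, symmetric] Bsh
  using dd[of m] q0 by (simp add: field_simps; simp add: Dsh Dsh' Bsh Bsh' field_simps power2_eq_square)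

lemma chigh_bd: "chigh GB GD m = q * chigh GD GB m"
  unfolding chigh_def Uc.simps Lc.simps prodB[of m, symmetric] Bsh
  using dd[of m] q0 by (simp add: field_simps; simp add: Dsh Dsh' Bsh Bsh' field_simps power2_eq_square)

lemma clow_cd: "clow GC GD m = q * clow GD GC m"
  unfolding clow_def Uc.simps Lc.simps prodB[of m, symmetric] Bsh
  using dd[of m] q0 by (simp add: field_simps; simp add: Dsh Dsh' Bsh Bsh' field_simps power2_eq_square)

lemma cmid_cd: "cmid GC GD m = q * cmid GD GC m"
  unfolding cmid_def Uc.simps Lc.simps prodB[of m, symmetric] Bsh
  using dd[of m] q0 by (simp add: field_simps; simp add: Dsh Dsh' Bsh Bsh' field_simps power2_eq_square)

lemma chigh_cd: "chigh GC GD m = q * chigh GD GC m"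
  unfolding chigh_def Uc.simps Lc.simps prodB[of m, symmetric] Bsh
  using dd[of m] q0 by (simp add: field_simps; simp add: Dsh Dsh' Bsh Bsh' field_simps power2_eq_square)

lemma clow_da: "clow GD GA m = inverse q * clow GB GC m"
  unfolding clow_def Uc.simps Lc.simps prodB[of m, symmetric] Bsh
  using dd[of m] q0 by (simp add: field_simps; simp add: Dsh Dsh' Bsh Bsh' field_simps power2_eq_square)

lemma chigh_da: "chigh GD GA m = inverse q * chigh GB GC m"
  unfolding chigh_def Uc.simps Lc.simps prodB[of m, symmetric] Bsh
  using dd[of m] q0 by (simp add: field_simps; simp add: Dsh Dsh' Bsh Bsh' field_simps power2_eq_square)

lemma cmid_da: "cmid GD GA m = inverse q * cmid GB GC m + 1"
  unfolding cmid_def Uc.simps Lc.simps prodB[of m, symmetric] Bsh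
  using dd[of m] q0 by (simp add: field_simps; simp add: Dsh Dsh' Bsh Bsh' field_simps power2_eq_square)

lemma clow_ad: "clow GA GD m = q * clow GB GC m"
  unfolding clow_def Uc.simps Lc.simps prodB[of m, symmetric] Bsh
  using dd[of m] q0 by (simp add: field_simps; simp add: Dsh Dsh' Bsh Bsh' field_simps power2_eq_square)

lemma chigh_ad: "chigh GA GD m = q * chigh GB GC m"
  unfolding chigh_def Uc.simps Lc.simps prodB[of m, symmetric] Bsh
  using dd[of m] q0 by (simp add: field_simps; simp add: Dsh Dsh' Bsh Bsh' field_simps power2_eq_square)

lemma cmid_ad: "cmid GA GD m = q * cmid GB GC m + 1"
  unfolding cmid_def Uc.simps Lc.simps prodB[of m, symmetric] Bsh
  using dd[of m] q0 by (simp add: field_simps; simp add: Dsh Dsh' Bsh Bsh' field_simps power2_eq_square)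

end

context laur begin

lemma act_add: "act (v + w) g = act v g + act w g"
  by (simp add: act_def fun_eq_iff fun_applys algebra_simps)
lemma act_fsc: "act (fsc c v) g = fsc c (act v g)"
  by (simp add: act_def fun_eq_iff fun_applys algebra_simps)
lemma act_zero[simp]: "act 0 g = 0"
  by (simp add: act_def fun_eq_iff fun_applys)
lemma act_diff: "act (v - w) g = act v g - act w g"
  by (simp add: act_def fun_eq_iff fun_applys algebra_simps)

lemma finsupp_act[intro]: assumes v: "v \<in> finsupp" shows "act v g \<in> finsupp"
proof -
  have "supp (act v g) \<subseteq> (\<lambda>n. n + 1) ` supp v \<union> (\<lambda>n. n - 1) ` supp v"
  proof
    fix m assume "m \<in> supp (act v g)"
    then have "v (m - 1) \<noteq> 0 \<or> v (m + 1) \<noteq> 0" by (auto simp: supp_def act_def)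
    then show "m \<in> (\<lambda>n. n + 1) ` supp v \<union> (\<lambda>n. n - 1) ` supp v"
      by (auto simp: supp_def image_iff)
  qed
  then show ?thesis using v by (auto simp: finsupp_iff intro: finite_subset)
qed

definition actw :: "(int \<Rightarrow> complex) \<Rightarrow> gen list \<Rightarrow> int \<Rightarrow> complex" where
  "actw v w = foldl act v w"

lemma actw_Nil[simp]: "actw v [] = v" by (simp add: actw_def)
lemma actw_snoc: "actw v (w @ [g]) = act (actw v w) g" by (simp add: actw_def)
lemma actw_append: "actw v (u @ w) = actw (actw v u) w" by (simp add: actw_def)
lemma actw_add: "actw (v + v') w = actw v w + actw v' w"
  by (induction w arbitrary: v v') (simp_all add: actw_def act_add)
lemma actw_fsc: "actw (fsc c v) w = fsc c (actw v w)"
  by (induction w arbitrary: v) (simp_all add: actw_def act_fsc)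
lemma actw_zero[simp]: "actw 0 w = 0"
  by (induction w) (simp_all add: actw_def)
lemma finsupp_actw[intro]: "v \<in> finsupp \<Longrightarrow> actw v w \<in> finsupp"
  by (induction w arbitrary: v) (auto simp: actw_def)

definition actF :: "(int \<Rightarrow> complex) \<Rightarrow> fa \<Rightarrow> int \<Rightarrow> complex" where
  "actF v f = lext f (actw v)"

lemma flinear_actF: "flinear (actF v)"
  unfolding actF_def[abs_def] by (rule lext_linear)

lemma actF_wmon[simp]: "actF v (wmon w) = actw v w"
  by (simp add: actF_def wmon_pmon)

lemma actF_pmon[simp]: "actF v (pmon w) = actw v w"
  by (simp add: actF_def)

lemma actF_vadd: "actF (v + v') f = actF v f + actF v' f"
  by (simp add: actF_def lext_def actw_add fsc_add sum.distrib)
lemma actF_vfsc: "actF (fsc c v) f = fsc c (actF v f)"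
proof -
  have "fsc (f x) (fsc c (actw v x)) = fsc c (fsc (f x) (actw v x))" for x
    by (simp add: fsc_fsc mult.commute)
  then show ?thesis
    by (simp add: actF_def lext_def actw_fsc fun_eq_iff sum_fun_apply fsc_apply sum_distrib_left mult.left_commute)
qed
lemma actF_vzero[simp]: "actF 0 f = 0"
  by (simp add: actF_def lext_def)

lemma finsupp_actF[intro]: "v \<in> finsupp \<Longrightarrow> actF v f \<in> finsupp"
  unfolding actF_def by (rule lext_finsupp) auto

lemma actF_fmul:
  assumes f: "f \<in> finsupp" and g: "g \<in> finsupp"
  shows "actF v (fmul f g) = actF (actF v f) g"
proof -
  have w: "actF v (fmul (wmon u) g) = actF (actw v u) g" for v u
  proof (rule flinear_eqI[OF _ flinear_actF _ g, where \<phi>="\<lambda>g. actF v (fmul (wmon u) g)"])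
    show "flinear (\<lambda>g. actF v (fmul (wmon u) g))"
      by (rule flinear_comp[OF flinear_actF flinear_fmul_right]) auto
    show "actF v (fmul (wmon u) (pmon x)) = actF (actw v u) (pmon x)" for x
      by (simp add: wmon_pmon[symmetric] fmul_wmon actw_append)
  qed
  show ?thesis
  proof (rule flinear_eqI[OF _ _ _ f, where \<phi>="\<lambda>f. actF v (fmul f g)"])
    show "flinear (\<lambda>f. actF v (fmul f g))"
      by (rule flinear_comp[OF flinear_actF flinear_fmul_left]) (use g in auto)
    show "flinear (\<lambda>f. actF (actF v f) g)"
      unfolding flinear_def using flinear_actF[of v]
      by (simp add: flinear_add flinear_fsc actF_vadd actF_vfsc)
    show "actF v (fmul (pmon x) g) = actF (actF v (pmon x)) g" for x
      using w[of v x] by (simp add: wmon_pmon)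
  qed
qed

lemma actF_diff: "f \<in> finsupp \<Longrightarrow> g \<in> finsupp \<Longrightarrow> actF v (f - g) = actF v f - actF v g"
  by (rule flinear_diff[OF flinear_actF])
lemma actF_add: "f \<in> finsupp \<Longrightarrow> g \<in> finsupp \<Longrightarrow> actF v (f + g) = actF v f + actF v g"
  by (rule flinear_add[OF flinear_actF])
lemma actF_fsc: "f \<in> finsupp \<Longrightarrow> actF v (fsc c f) = fsc c (actF v f)"
  by (rule flinear_fsc[OF flinear_actF])

lemma actF_w2: "actF v (fmul (wmon [x]) (wmon [y])) = act (act v x) y"
  by (simp add: fmul_wmon actw_def)
lemma actF_w1: "actF v (wmon [x]) = act v x"
  by (simp add: actw_def)

lemma rel_gen: "actF v (fmul (wmon [x]) (wmon [y]) - fsc c (fmul (wmon [x']) (wmon [y']))) =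
   act (act v x) y - fsc c (act (act v x') y')"
  by (simp add: actF_diff actF_fsc finsupp_fsc finsupp_fmul fmul_wmon actw_def)
lemma rel_gen3: "actF v (fmul (wmon [x]) (wmon [y]) - fsc c (fmul (wmon [x']) (wmon [y'])) - fone) =
   act (act v x) y - fsc c (act (act v x') y') - v"
  by (simp add: actF_diff actF_fsc finsupp_fsc finsupp_fmul fmul_wmon actw_def finsupp_diff fone_def)

lemma actF_rel:
  assumes r: "r \<in> slq_rels q"
  shows "actF v r = 0"
proof -
  note C = clow_ab cmid_ab chigh_ab clow_ac cmid_ac chigh_ac clow_bc cmid_bc chigh_bc clow_bd cmid_bd chigh_bd
     clow_cd cmid_cd chigh_cd clow_da cmid_da chigh_da clow_ad cmid_ad chigh_ad
  have e3: "fmul gB gC - fmul gC gB = fmul gB gC - fsc 1 (fmul gC gB)" by simp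
  have "r = fmul gA gB - fsc q (fmul gB gA) \<or> r = fmul gA gC - fsc q (fmul gC gA) \<or>
        r = fmul gB gC - fsc 1 (fmul gC gB) \<or> r = fmul gB gD - fsc q (fmul gD gB) \<or>
        r = fmul gC gD - fsc q (fmul gD gC) \<or> r = fmul gD gA - fsc (inverse q) (fmul gB gC) - fone \<or>
        r = fmul gA gD - fsc q (fmul gB gC) - fone"
    using r unfolding slq_rels_def by simp
  then show ?thesis
    unfolding gA_def gB_def gC_def gD_def
    by (elim disjE; simp only: rel_gen rel_gen3; simp add: fun_eq_iff fun_applys fsc_apply act2 C algebra_simps)
qed

definition v0 :: "int \<Rightarrow> complex" where "v0 = pmon 0"

lemma finsupp_v0[simp, intro]: "v0 \<in> finsupp" by (simp add: v0_def)

lemma act_g2: "actF v (g2 (\<beta> * \<beta>')) = 0"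
proof -
  have "actF v (g2 (\<beta> * \<beta>')) = fsc (\<beta> * \<beta>') (act v GB) + act v GC"
    unfolding g2_def gB_def gC_def
    by (simp add: actF_add actF_fsc finsupp_fsc actw_def finsupp_add)
  also have "\<dots> = 0"
    using D0 by (simp add: fun_eq_iff fun_applys fsc_apply act_def field_simps)
  finally show ?thesis .
qed

lemma act_g1: "actF v0 (g1 (\<beta> + \<beta>')) = 0"
proof -
  have "actF v0 (g1 (\<beta> + \<beta>')) = act v0 GA - act v0 GD + fsc (\<beta> + \<beta>') (act v0 GB)"
    unfolding g1_def gA_def gB_def gD_def
    by (simp add: actF_add actF_fsc actF_diff finsupp_fsc actw_def finsupp_add finsupp_diff)
  also have "\<dots> = 0"
  proof -
    have b0: "B 0 = \<beta>" "B' 0 = \<beta>'" by (simp_all add: B_def B'_def)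
    have "(act v0 GA - act v0 GD + fsc (\<beta> + \<beta>') (act v0 GB)) m = 0" for m
    proof -
      have "(act v0 GA - act v0 GD + fsc (\<beta> + \<beta>') (act v0 GB)) m =
        v0 (m - 1) * (Uc GA (m - 1) - Uc GD (m - 1) + (\<beta> + \<beta>') * Uc GB (m - 1))
        + v0 (m + 1) * (Lc GA (m + 1) - Lc GD (m + 1) + (\<beta> + \<beta>') * Lc GB (m + 1))"
        by (simp add: act_def fun_applys fsc_apply algebra_simps)
      also have "\<dots> = 0"
      proof (cases "m - 1 = 0 \<or> m + 1 = 0")
        case True
        then have "m = 1 \<or> m = -1" by auto
        have u: "Uc GA n - Uc GD n + (B n + B' n) * Uc GB n = 0"
          "Lc GA n - Lc GD n + (B n + B' n) * Lc GB n = 0" for n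
          using D0[of n] by (simp_all add: field_simps)
        show ?thesis using \<open>m = 1 \<or> m = -1\<close> u[of 0] b0
          by (auto simp: v0_def pmon_def)
      next
        case False
        then show ?thesis by (simp add: v0_def pmon_def)
      qed
      finally show ?thesis .
    qed
    then show ?thesis by (simp add: fun_eq_iff fun_applys)
  qed
  finally show ?thesis .
qed

definition phi :: "fa \<Rightarrow> int \<Rightarrow> complex" where "phi f = actF v0 f"

lemma phi_J:
  assumes j: "j \<in> Jc q (\<beta> + \<beta>') (\<beta> * \<beta>')"
  shows "phi j = 0"
proof -
  have "phi j = 0 \<and> j \<in> finsupp" using j unfolding Jc_def
  proof (induction rule: lspan.induct)
    case lspan_zero then show ?case by (simp add: phi_def flinear_zero[OF flinear_actF])
  next
    case (lspan_base x)
    then show ?case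
    proof
      assume "x \<in> Rset q"
      then obtain a r b where x: "x = fmul (fmul a r) b" "r \<in> slq_rels q" "a \<in> finsupp" "b \<in> finsupp"
        by (auto simp: Rset_def)
      have rf: "r \<in> finsupp" using finsupp_rels[OF x(2)] .
      have "phi x = actF (actF (actF v0 a) r) b"
        unfolding phi_def x using x rf by (simp add: actF_fmul finsupp_fmul)
      then show ?thesis using actF_rel[OF x(2)] x rf by (auto intro: finsupp_fmul)
    next
      assume "x \<in> Cset (\<beta> + \<beta>') (\<beta> * \<beta>')"
      then obtain c b where x: "x = fmul c b" "c \<in> {g1 (\<beta> + \<beta>'), g2 (\<beta> * \<beta>')}" "b \<in> finsupp"
        by (auto simp: Cset_def)
      have "phi x = actF (actF v0 c) b" unfolding phi_def x using x by (auto simp: actF_fmul)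
      then show ?thesis using x act_g1 act_g2 by auto
    qed
  next
    case (lspan_add x y) then show ?case by (simp add: phi_def actF_add finsupp_add)
  next
    case (lspan_scale x c) then show ?case by (simp add: phi_def actF_fsc finsupp_fsc)
  qed
  then show ?thesis ..
qed

end

context laur begin

definition Jl :: "int \<Rightarrow> fa set" where "Jl n = Jc q (B n + B' n) (\<beta> * \<beta>')"

lemma Jl0: "Jl 0 = Jc q (\<beta> + \<beta>') (\<beta> * \<beta>')" by (simp add: Jl_def B_def B'_def)

lemma Bsucc: "B (n + 1) = B n / q" "B' (n + 1) = B' n * q"
  using LB_succ[OF q0] LB'_succ[OF q0] by (simp_all add: B_def B'_def)
lemma Bpred: "B (n - 1) = B n * q" "B' (n - 1) = B' n / q"
  using Bsucc[of "n - 1"] q0 by (simp_all add: field_simps)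

fun xp :: "nat \<Rightarrow> fa" where
  "xp 0 = fone" | "xp (Suc k) = fmul (xp k) (ystep (B (int k)))"
fun xm :: "nat \<Rightarrow> fa" where
  "xm 0 = fone" | "xm (Suc k) = fmul (xm k) (ystep (B' (- int k)))"
definition xx :: "int \<Rightarrow> fa" where "xx n = (if n \<ge> 0 then xp (nat n) else xm (nat (- n)))"

lemma xx0[simp]: "xx 0 = fone" by (simp add: xx_def)
lemma xx_up: "n \<ge> 0 \<Longrightarrow> xx (n + 1) = fmul (xx n) (ystep (B n))"
  by (simp add: xx_def nat_add_distrib)
lemma xx_down: "n \<le> 0 \<Longrightarrow> xx (n - 1) = fmul (xx n) (ystep (B' n))"
proof -
  assume n: "n \<le> 0"
  have "nat (- (n - 1)) = Suc (nat (- n))" using n by simp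
  then show ?thesis using n by (cases "n = 0") (auto simp: xx_def)
qed

lemma finsupp_xp: "xp k \<in> finsupp" by (induction k) auto
lemma finsupp_xm: "xm k \<in> finsupp" by (induction k) auto
lemma finsupp_xx[simp, intro]: "xx n \<in> finsupp" by (simp add: xx_def finsupp_xp finsupp_xm)

lemma Jl_fin: "j \<in> Jl n \<Longrightarrow> j \<in> finsupp" unfolding Jl_def by (rule Jc_finsupp)

lemma step_up_J: "j \<in> Jl (n + 1) \<Longrightarrow> fmul (ystep (B n)) j \<in> Jl n"
  using step_J[OF q0, of j "B n" "B' n"] by (simp add: Jl_def Bsucc prodB)

lemma step_down_J: "j \<in> Jl (n - 1) \<Longrightarrow> fmul (ystep (B' n)) j \<in> Jl n"
  using step_J[OF q0, of j "B' n" "B n"] q0 by (simp add: Jl_def Bpred prodB add.commute mult.commute)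

lemma xx_J: "j \<in> Jl n \<Longrightarrow> fmul (xx n) j \<in> Jl 0"
proof (induction n arbitrary: j rule: int_induct[where k=0])
  case base then show ?case by simp
next
  case (step1 i)
  have "fmul (xx (i + 1)) j = fmul (xx i) (fmul (ystep (B i)) j)"
    using step1 Jl_fin by (simp add: xx_up fmul_assoc)
  then show ?case using step1 step_up_J by simp
next
  case (step2 i)
  have "fmul (xx (i - 1)) j = fmul (xx i) (fmul (ystep (B' i)) j)"
    using step2 Jl_fin by (simp add: xx_down fmul_assoc)
  then show ?case using step2 step_down_J by simp
qed

lemma inv_up: "fmul (ystep (B n)) (ystep (B' (n + 1))) - fone \<in> Jl n"
  using step_inv[OF q0, of "B n" "B' n"] by (simp add: Jl_def Bsucc prodB)
lemma inv_down: "fmul (ystep (B' n)) (ystep (B (n - 1))) - fone \<in> Jl n"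
  using step_inv[OF q0, of "B' n" "B n"] by (simp add: Jl_def Bpred prodB add.commute mult.commute)

lemma cong_up: "fmul (xx n) (ystep (B n)) - xx (n + 1) \<in> Jl 0"
proof (cases "n \<ge> 0")
  case True then show ?thesis by (simp add: xx_up J_zero Jl_def)
next
  case False
  then have n: "n + 1 \<le> 0" by simp
  have e: "xx n = fmul (xx (n + 1)) (ystep (B' (n + 1)))" using xx_down[OF n] by simp
  have "fmul (xx n) (ystep (B n)) - xx (n + 1) =
        fmul (xx (n + 1)) (fmul (ystep (B' (n + 1))) (ystep (B n)) - fone)"
    by (simp add: e fmul_assoc fmul_diff_right)
  moreover have "fmul (ystep (B' (n + 1))) (ystep (B n)) - fone \<in> Jl (n + 1)"
    using inv_down[of "n + 1"] by simp
  ultimately show ?thesis using xx_J by simp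
qed

lemma cong_down: "fmul (xx n) (ystep (B' n)) - xx (n - 1) \<in> Jl 0"
proof (cases "n \<le> 0")
  case True then show ?thesis by (simp add: xx_down J_zero Jl_def)
next
  case False
  then have n: "n - 1 \<ge> 0" by simp
  have e: "xx n = fmul (xx (n - 1)) (ystep (B (n - 1)))" using xx_up[OF n] by simp
  have "fmul (xx n) (ystep (B' n)) - xx (n - 1) =
        fmul (xx (n - 1)) (fmul (ystep (B (n - 1))) (ystep (B' n)) - fone)"
    by (simp add: e fmul_assoc fmul_diff_right)
  moreover have "fmul (ystep (B (n - 1))) (ystep (B' n)) - fone \<in> Jl (n - 1)"
    using inv_up[of "n - 1"] by simp
  ultimately show ?thesis using xx_J by simp
qed

lemma Jl_add: "x \<in> Jl n \<Longrightarrow> y \<in> Jl n \<Longrightarrow> x + y \<in> Jl n" unfolding Jl_def by (rule J_add)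
lemma Jl_fsc: "x \<in> Jl n \<Longrightarrow> fsc c x \<in> Jl n" unfolding Jl_def by (rule J_fsc)
lemma Jl_diff: "x \<in> Jl n \<Longrightarrow> y \<in> Jl n \<Longrightarrow> x - y \<in> Jl n" unfolding Jl_def by (rule J_diff)
lemma Jl_zero: "0 \<in> Jl n" unfolding Jl_def by (rule J_zero)

lemma gen_cong: "fmul (xx n) (wmon [g]) - (fsc (Uc g n) (xx (n + 1)) + fsc (Lc g n) (xx (n - 1))) \<in> Jl 0"
proof -
  let ?P = "fmul (xx n) gD" and ?Q = "fmul (xx n) gB" and ?X1 = "xx (n + 1)" and ?X2 = "xx (n - 1)"
  let ?Cp = "fmul (xx n) (ystep (B n)) - xx (n + 1)" and ?Cm = "fmul (xx n) (ystep (B' n)) - xx (n - 1)"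
  have ys: "fmul (xx n) (ystep c) = ?P - fsc c ?Q" for c by (simp add: ystep_def fmul_lin)
  have d: "D n \<noteq> 0" by (rule D0)
  have cp: "?Cp \<in> Jl 0" by (rule cong_up)
  have cm: "?Cm \<in> Jl 0" by (rule cong_down)
  have J1: "fmul (xx n) (g1 (B n + B' n)) \<in> Jl 0"
    by (rule xx_J) (use J_g1[of fone] in \<open>simp add: Jl_def\<close>)
  have J2: "fmul (xx n) (g2 (\<beta> * \<beta>')) \<in> Jl 0"
    by (rule xx_J) (use J_g2[of fone] in \<open>simp add: Jl_def\<close>)
  have eA: "gA = g1 (B n + B' n) + gD - fsc (B n + B' n) gB" by (simp add: g1_def fun_eq_iff fun_applys fsc_apply)
  have eC: "gC = g2 (\<beta> * \<beta>') - fsc (\<beta> * \<beta>') gB" by (simp add: g2_def fun_eq_iff fun_applys fsc_apply)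
  have pr: "\<beta> * \<beta>' = B n * B' n" using prodB[of n] by simp
  have bD: "B n = B' n + D n" by (simp add: D_def)
  show ?thesis
  proof (cases g)
    case GA
    have "fmul (xx n) (wmon [g]) - (fsc (Uc g n) ?X1 + fsc (Lc g n) ?X2) =
          fmul (xx n) (g1 (B n + B' n)) + fsc (Lc GA n) ?Cm + fsc (Uc GA n) ?Cp"
      unfolding GA gA_def[symmetric] ys
      apply (subst eA)
      apply ((simp only: fmul_lin)?)
      using d by (simp add: fun_eq_iff fun_applys fsc_apply field_simps bD)
    then show ?thesis using J1 cp cm by (simp add: Jl_add Jl_fsc)
  next
    case GB
    have "fmul (xx n) (wmon [g]) - (fsc (Uc g n) ?X1 + fsc (Lc g n) ?X2) =
          fsc (Lc GB n) ?Cm + fsc (Uc GB n) ?Cp"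
      unfolding GB gB_def[symmetric] ys
      apply ((simp only: fmul_lin)?)
      using d by (simp add: fun_eq_iff fun_applys fsc_apply field_simps bD)
    then show ?thesis using cp cm by (simp add: Jl_add Jl_fsc)
  next
    case GC
    have "fmul (xx n) (wmon [g]) - (fsc (Uc g n) ?X1 + fsc (Lc g n) ?X2) =
          fmul (xx n) (g2 (\<beta> * \<beta>')) + fsc (Lc GC n) ?Cm + fsc (Uc GC n) ?Cp"
      unfolding GC gC_def[symmetric] ys
      apply (subst eC)
      apply (simp only: fmul_lin pr)
      using d by (simp add: fun_eq_iff fun_applys fsc_apply field_simps bD pr)
    then show ?thesis using J2 cp cm by (simp add: Jl_add Jl_fsc)
  next
    case GD
    have "fmul (xx n) (wmon [g]) - (fsc (Uc g n) ?X1 + fsc (Lc g n) ?X2) =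
          fsc (Lc GD n) ?Cm + fsc (Uc GD n) ?Cp"
      unfolding GD gD_def[symmetric] ys
      apply ((simp only: fmul_lin)?)
      using d by (simp add: fun_eq_iff fun_applys fsc_apply field_simps bD)
    then show ?thesis using cp cm by (simp add: Jl_add Jl_fsc)
  qed
qed

end

context laur begin

definition sec :: "(int \<Rightarrow> complex) \<Rightarrow> fa" where "sec v = lext v xx"

lemma flinear_sec: "flinear sec" unfolding sec_def[abs_def] by (rule lext_linear)
lemma sec_pmon[simp]: "sec (pmon n) = xx n" by (simp add: sec_def)
lemma finsupp_sec[intro]: "sec v \<in> finsupp" unfolding sec_def by (rule lext_finsupp) auto
lemma sec_zero[simp]: "sec 0 = 0" using flinear_zero[OF flinear_sec] .

lemma act_pmon: "act (pmon n) g = fsc (Uc g n) (pmon (n + 1)) + fsc (Lc g n) (pmon (n - 1))"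
  by (auto simp: act_def fun_eq_iff fun_applys fsc_apply pmon_def)

lemma span_step:
  assumes V: "V \<in> finsupp"
  shows "fmul (sec V) (wmon [g]) - sec (act V g) \<in> Jl 0"
  using V
proof (induction rule: finsupp_induct)
  case zero then show ?case by (simp add: Jl_zero)
next
  case (add n c V')
  have f1: "fsc c (pmon n) \<in> finsupp" by auto
  have s1: "sec (fsc c (pmon n) + V') = fsc c (xx n) + sec V'"
    using flinear_add[OF flinear_sec f1 add(1)] flinear_fsc[OF flinear_sec finsupp_pmon] by simp
  have a1: "act (fsc c (pmon n) + V') g = fsc c (fsc (Uc g n) (pmon (n + 1)) + fsc (Lc g n) (pmon (n - 1))) + act V' g"
    by (simp add: act_add act_fsc act_pmon)
  have f2: "fsc c (fsc (Uc g n) (pmon (n + 1)) + fsc (Lc g n) (pmon (n - 1))) \<in> finsupp" by (auto intro!: finsupp_fsc finsupp_add)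
  have s2: "sec (act (fsc c (pmon n) + V') g) = fsc c (fsc (Uc g n) (xx (n + 1)) + fsc (Lc g n) (xx (n - 1))) + sec (act V' g)"
    unfolding a1 using flinear_add[OF flinear_sec f2 finsupp_act[OF add(1)]]
    by (simp add: flinear_fsc[OF flinear_sec] flinear_add[OF flinear_sec] finsupp_fsc finsupp_add)
  have "fmul (sec (fsc c (pmon n) + V')) (wmon [g]) - sec (act (fsc c (pmon n) + V') g)
     = fsc c (fmul (xx n) (wmon [g]) - (fsc (Uc g n) (xx (n + 1)) + fsc (Lc g n) (xx (n - 1))))
       + (fmul (sec V') (wmon [g]) - sec (act V' g))"
    unfolding s1 s2 by (simp add: fmul_lin fsc_diff fsc_add algebra_simps)
  then show ?case using gen_cong[of n g] add(2) by (simp add: Jl_add Jl_fsc)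
qed

lemma phi_wmon: "phi (wmon w) = actw v0 w" by (simp add: phi_def)

lemma word_span: "wmon w - sec (phi (wmon w)) \<in> Jl 0"
proof (induction w rule: rev_induct)
  case Nil
  have "phi (wmon []) = pmon 0" by (simp add: phi_wmon v0_def)
  then show ?case by (simp add: fone_def[symmetric] Jl_zero)
next
  case (snoc g w)
  let ?V = "phi (wmon w)"
  have V: "?V \<in> finsupp" by (simp add: phi_wmon finsupp_actw)
  have e: "phi (wmon (w @ [g])) = act ?V g" by (simp add: phi_wmon actw_snoc)
  have "wmon (w @ [g]) - sec (phi (wmon (w @ [g]))) =
        fmul (wmon w - sec ?V) (wmon [g]) + (fmul (sec ?V) (wmon [g]) - sec (act ?V g))"
    unfolding e by (simp add: fmul_wmon[symmetric] fmul_lin)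
  moreover have "fmul (wmon w - sec ?V) (wmon [g]) \<in> Jl 0"
    using J_right[OF snoc[unfolded Jl_def]] by (simp add: Jl_def)
  ultimately show ?case using span_step[OF V, of g] by (simp add: Jl_add)
qed

lemma flinear_phi: "flinear phi" unfolding phi_def[abs_def] by (rule flinear_actF)
lemma finsupp_phi[intro]: "phi f \<in> finsupp" unfolding phi_def by auto

lemma main_span:
  assumes f: "f \<in> finsupp"
  shows "f - sec (phi f) \<in> Jl 0"
  using f
proof (induction rule: finsupp_induct)
  case zero then show ?case by (simp add: flinear_zero[OF flinear_phi] Jl_zero)
next
  case (add w c g)
  have f1: "fsc c (pmon w) \<in> finsupp" by auto
  have eq: "fsc c (pmon w) + g - sec (phi (fsc c (pmon w) + g)) =
      fsc c (wmon w - sec (phi (wmon w))) + (g - sec (phi g))"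
  proof -
    have p1: "phi (fsc c (pmon w) + g) = fsc c (phi (pmon w)) + phi g"
      using add(1) f1 by (simp add: flinear_add[OF flinear_phi] flinear_fsc[OF flinear_phi])
    have p2: "sec (fsc c (phi (pmon w)) + phi g) = fsc c (sec (phi (pmon w))) + sec (phi g)"
      by (simp add: flinear_add[OF flinear_sec] flinear_fsc[OF flinear_sec] finsupp_fsc finsupp_phi)
    show ?thesis unfolding p1 p2 by (simp add: wmon_pmon fsc_diff algebra_simps)
  qed
  show ?case unfolding eq by (rule Jl_add[OF Jl_fsc[OF word_span] add(2)])
qed

lemma phi_xx: "phi (xx n) = pmon n"
proof (induction n rule: int_induct[where k=0])
  case base then show ?case by (simp add: phi_def fone_def v0_def)
next
  case (step1 i)
  have "phi (xx (i + 1)) = actF (phi (xx i)) (ystep (B i))"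
    using step1(1) by (simp add: xx_up phi_def actF_fmul)
  also have "\<dots> = act (pmon i) GD - fsc (B i) (act (pmon i) GB)"
    by (simp add: step1(2) ystep_def gD_def gB_def actF_diff actF_fsc finsupp_fsc actw_def)
  also have "\<dots> = pmon (i + 1)"
  proof -
    have bD: "B i = B' i + D i" by (simp add: D_def)
    show ?thesis unfolding act_pmon using D0[of i]
      by (auto simp: fun_eq_iff fun_applys fsc_apply pmon_def field_simps bD)
  qed
  finally show ?case .
next
  case (step2 i)
  have "phi (xx (i - 1)) = actF (phi (xx i)) (ystep (B' i))"
    using step2(1) by (simp add: xx_down phi_def actF_fmul)
  also have "\<dots> = act (pmon i) GD - fsc (B' i) (act (pmon i) GB)"
    by (simp add: step2(2) ystep_def gD_def gB_def actF_diff actF_fsc finsupp_fsc actw_def)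
  also have "\<dots> = pmon (i - 1)"
  proof -
    have bD: "B i = B' i + D i" by (simp add: D_def)
    show ?thesis unfolding act_pmon using D0[of i]
      by (auto simp: fun_eq_iff fun_applys fsc_apply pmon_def field_simps bD)
  qed
  finally show ?case .
qed

lemma phi_sec: "v \<in> finsupp \<Longrightarrow> phi (sec v) = v"
proof (rule flinear_eqI[where \<phi>="\<lambda>v. phi (sec v)" and \<psi>="\<lambda>v. v"])
  show "flinear (\<lambda>v. phi (sec v))" by (rule flinear_comp[OF flinear_phi flinear_sec]) auto
  show "flinear (\<lambda>v. v)" by (simp add: flinear_def)
qed (simp_all add: phi_xx)

end

context laur begin

lemma idem:
  fixes g :: gen and p :: int
  shows "Uc (gent (grow g) 1) p * Uc (gent 1 (gcol g)) p + Uc (gent (grow g) 2) p * Uc (gent 2 (gcol g)) p = Uc g p"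
    and "Lc (gent (grow g) 1) p * Lc (gent 1 (gcol g)) p + Lc (gent (grow g) 2) p * Lc (gent 2 (gcol g)) p = Lc g p"
    and "Uc (gent (grow g) 1) p * Lc (gent 1 (gcol g)) p + Uc (gent (grow g) 2) p * Lc (gent 2 (gcol g)) p = 0"
    and "Lc (gent (grow g) 1) p * Uc (gent 1 (gcol g)) p + Lc (gent (grow g) 2) p * Uc (gent 2 (gcol g)) p = 0"
proof -
  have bD: "B p = B' p + D p" by (simp add: D_def)
  have pr: "\<beta> * \<beta>' = B p * B' p" using prodB[of p] by simp
  have d: "D p \<noteq> 0" by (rule D0)
  show "Uc (gent (grow g) 1) p * Uc (gent 1 (gcol g)) p + Uc (gent (grow g) 2) p * Uc (gent 2 (gcol g)) p = Uc g p"
    using d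
    by (cases g) (simp_all add: gent_def pr bD field_simps power2_eq_square)
  show "Lc (gent (grow g) 1) p * Lc (gent 1 (gcol g)) p + Lc (gent (grow g) 2) p * Lc (gent 2 (gcol g)) p = Lc g p"
    using d
    by (cases g) (simp_all add: gent_def pr bD field_simps power2_eq_square)
  show "Uc (gent (grow g) 1) p * Lc (gent 1 (gcol g)) p + Uc (gent (grow g) 2) p * Lc (gent 2 (gcol g)) p = 0"
    using d
    by (cases g) (simp_all add: gent_def pr bD field_simps power2_eq_square)
  show "Lc (gent (grow g) 1) p * Uc (gent 1 (gcol g)) p + Lc (gent (grow g) 2) p * Uc (gent 2 (gcol g)) p = 0"
    using d
    by (cases g) (simp_all add: gent_def pr bD field_simps power2_eq_square)
qed

definition act2t :: "(int \<times> int \<Rightarrow> complex) \<Rightarrow> gen \<Rightarrow> gen \<Rightarrow> int \<times> int \<Rightarrow> complex" where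
  "act2t P ga gb = (\<lambda>(m, n). P (m - 1, n - 1) * Uc ga (m - 1) * Uc gb (n - 1)
      + P (m - 1, n + 1) * Uc ga (m - 1) * Lc gb (n + 1)
      + P (m + 1, n - 1) * Lc ga (m + 1) * Uc gb (n - 1)
      + P (m + 1, n + 1) * Lc ga (m + 1) * Lc gb (n + 1))"

lemma act2t_tens: "act2t (tens X Y) ga gb = tens (act X ga) (act Y gb)"
  by (auto simp: act2t_def tens_def act_def fun_eq_iff algebra_simps)

lemma flinear_act2t: "flinear (\<lambda>P. act2t P ga gb)"
  by (auto simp: flinear_def act2t_def fun_eq_iff fun_applys fsc_apply algebra_simps)

lemma tmap_step:
  assumes H: "H \<in> finsupp"
  shows "tmap phi phi (tmul H (tens (wmon [ga]) (wmon [gb]))) = act2t (tmap phi phi H) ga gb"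
proof (rule flinear_eqI[OF _ _ _ H, where \<phi>="\<lambda>H. tmap phi phi (tmul H (tens (wmon [ga]) (wmon [gb])))"
      and \<psi>="\<lambda>H. act2t (tmap phi phi H) ga gb"])
  show "flinear (\<lambda>H. tmap phi phi (tmul H (tens (wmon [ga]) (wmon [gb]))))"
    by (rule flinear_comp[OF flinear_tmap flinear_tmul_left]) auto
  show "flinear (\<lambda>H. act2t (tmap phi phi H) ga gb)"
    by (rule flinear_comp[OF flinear_act2t flinear_tmap]) auto
  fix p :: "gen list \<times> gen list"
  obtain u v where p: "p = (u, v)" by (cases p)
  have "tmul (pmon p) (tens (wmon [ga]) (wmon [gb])) = pmon (u @ [ga], v @ [gb])"
    by (simp add: p tens_pmon[symmetric] wmon_pmon tmul_tens fmul_wmon[unfolded wmon_pmon])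
  then show "tmap phi phi (tmul (pmon p) (tens (wmon [ga]) (wmon [gb]))) = act2t (tmap phi phi (pmon p)) ga gb"
    by (simp add: p tmap_pmon act2t_tens phi_wmon actw_snoc)
qed

lemma act2t_lcomult: "act2t (lcomult V) x y (m, n) =
  (if m = n then V (n - 1) * Uc x (n - 1) * Uc y (n - 1) + V (n + 1) * Lc x (n + 1) * Lc y (n + 1)
   else if m = n + 2 then V (n + 1) * Uc x (n + 1) * Lc y (n + 1)
   else if m = n - 2 then V (n - 1) * Lc x (n - 1) * Uc y (n - 1) else 0)"
proof -
  consider "m = n" | "m \<noteq> n" "m = n + 2" | "m \<noteq> n" "m \<noteq> n + 2" "m = n - 2" | "m \<noteq> n" "m \<noteq> n + 2" "m \<noteq> n - 2"
    by blast
  then show ?thesis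
  proof cases
    case 1 then show ?thesis by (simp add: act2t_def lcomult_def)
  next
    case 2 then show ?thesis by (simp add: act2t_def lcomult_def algebra_simps)
  next
    case 3
    then have nm: "n = m + 2" by simp
    show ?thesis using 3 unfolding nm by (simp add: act2t_def lcomult_def algebra_simps)
  next
    case 4 then show ?thesis by (auto simp: act2t_def lcomult_def algebra_simps)
  qed
qed

lemma lcomult_step:
  "act2t (lcomult V) (gent (grow g) 1) (gent 1 (gcol g)) + act2t (lcomult V) (gent (grow g) 2) (gent 2 (gcol g))
   = lcomult (act V g)"
proof -
  have "(act2t (lcomult V) (gent (grow g) 1) (gent 1 (gcol g)) + act2t (lcomult V) (gent (grow g) 2) (gent 2 (gcol g))) (m, n)
     = lcomult (act V g) (m, n)" for m n
  proof -
    note I = idem[of g, unfolded One_nat_def]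
    consider "m = n" | "m \<noteq> n" "m = n + 2" | "m \<noteq> n" "m \<noteq> n + 2" "m = n - 2" | "m \<noteq> n" "m \<noteq> n + 2" "m \<noteq> n - 2"
      by blast
    then show ?thesis
    proof cases
      case 1
      have "(act2t (lcomult V) (gent (grow g) 1) (gent 1 (gcol g)) + act2t (lcomult V) (gent (grow g) 2) (gent 2 (gcol g))) (m, n)
        = V (n - 1) * (Uc (gent (grow g) 1) (n - 1) * Uc (gent 1 (gcol g)) (n - 1) + Uc (gent (grow g) 2) (n - 1) * Uc (gent 2 (gcol g)) (n - 1))
        + V (n + 1) * (Lc (gent (grow g) 1) (n + 1) * Lc (gent 1 (gcol g)) (n + 1) + Lc (gent (grow g) 2) (n + 1) * Lc (gent 2 (gcol g)) (n + 1))"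
        using 1 by (simp add: act2t_lcomult fun_applys algebra_simps)
      also have "\<dots> = lcomult (act V g) (m, n)"
        using 1 by (simp add: I lcomult_def act_def One_nat_def)
      finally show ?thesis .
    next
      case 2
      have "(act2t (lcomult V) (gent (grow g) 1) (gent 1 (gcol g)) + act2t (lcomult V) (gent (grow g) 2) (gent 2 (gcol g))) (m, n)
        = V (n + 1) * (Uc (gent (grow g) 1) (n + 1) * Lc (gent 1 (gcol g)) (n + 1) + Uc (gent (grow g) 2) (n + 1) * Lc (gent 2 (gcol g)) (n + 1))"
        using 2 by (simp add: act2t_lcomult fun_applys algebra_simps)
      also have "\<dots> = lcomult (act V g) (m, n)"
        using 2 by (simp add: I lcomult_def One_nat_def)
      finally show ?thesis .
    next
      case 3
      have "(act2t (lcomult V) (gent (grow g) 1) (gent 1 (gcol g)) + act2t (lcomult V) (gent (grow g) 2) (gent 2 (gcol g))) (m, n)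
        = V (n - 1) * (Lc (gent (grow g) 1) (n - 1) * Uc (gent 1 (gcol g)) (n - 1) + Lc (gent (grow g) 2) (n - 1) * Uc (gent 2 (gcol g)) (n - 1))"
        using 3 by (simp add: act2t_lcomult fun_applys algebra_simps)
      also have "\<dots> = lcomult (act V g) (m, n)"
        using 3 by (simp add: I lcomult_def One_nat_def)
      finally show ?thesis .
    next
      case 4
      then show ?thesis by (simp only: plus_fun_apply act2t_lcomult) (simp add: lcomult_def)
    qed
  qed
  then show ?thesis by (auto simp: fun_eq_iff)
qed

lemma lcomult_add: "lcomult (f + g) = lcomult f + lcomult g"
  by (auto simp: lcomult_def fun_eq_iff fun_applys)
lemma lcomult_fsc: "lcomult (fsc c f) = fsc c (lcomult f)"
  by (auto simp: lcomult_def fun_eq_iff fun_applys fsc_apply)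
lemma flinear_lcomult_phi: "flinear (\<lambda>f. lcomult (phi f))"
  using flinear_phi unfolding flinear_def by (simp add: lcomult_add lcomult_fsc)

lemma coalg_word: "tmap phi phi (fcomult (wmon w)) = lcomult (phi (wmon w))"
proof (induction w rule: rev_induct)
  case Nil
  have "tmap phi phi (fcomult (wmon [])) = tens (phi fone) (phi fone)"
    by (simp add: fone_def[symmetric] fcomult_fone tmap_tens[OF flinear_phi flinear_phi])
  also have "\<dots> = lcomult (phi (wmon []))"
    by (auto simp: phi_def fone_def v0_def tens_def lcomult_def pmon_def fun_eq_iff)
  finally show ?case .
next
  case (snoc g w)
  let ?F = "fcomult (wmon w)"
  have F: "?F \<in> finsupp" by auto
  have "fcomult (wmon (w @ [g])) = tmul ?F (tens (wmon [gent (grow g) 1]) (wmon [gent 1 (gcol g)]))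
      + tmul ?F (tens (wmon [gent (grow g) 2]) (wmon [gent 2 (gcol g)]))"
    by (simp add: fmul_wmon[symmetric] fcomult_fmul fcomult_wmon1 tmul_add_right)
  then have "tmap phi phi (fcomult (wmon (w @ [g]))) =
      tmap phi phi (tmul ?F (tens (wmon [gent (grow g) 1]) (wmon [gent 1 (gcol g)])))
      + tmap phi phi (tmul ?F (tens (wmon [gent (grow g) 2]) (wmon [gent 2 (gcol g)])))"
    using F by (simp add: flinear_add[OF flinear_tmap] finsupp_tmul finsupp_tens)
  also have "\<dots> = act2t (lcomult (phi (wmon w))) (gent (grow g) 1) (gent 1 (gcol g))
      + act2t (lcomult (phi (wmon w))) (gent (grow g) 2) (gent 2 (gcol g))"
    by (simp only: tmap_step[OF F] snoc)
  also have "\<dots> = lcomult (act (phi (wmon w)) g)" by (rule lcomult_step)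
  also have "\<dots> = lcomult (phi (wmon (w @ [g])))" by (simp add: phi_wmon actw_snoc)
  finally show ?case .
qed

lemma coalg_phi: "f \<in> finsupp \<Longrightarrow> tmap phi phi (fcomult f) = lcomult (phi f)"
proof (rule flinear_eqI[where \<phi>="\<lambda>f. tmap phi phi (fcomult f)" and \<psi>="\<lambda>f. lcomult (phi f)"])
  show "flinear (\<lambda>f. tmap phi phi (fcomult f))"
    by (rule flinear_comp[OF flinear_tmap flinear_fcomult]) auto
  show "flinear (\<lambda>f. lcomult (phi f))" by (rule flinear_lcomult_phi)
qed (simp_all add: coalg_word[unfolded wmon_pmon])

lemma leps_superset: "finite S \<Longrightarrow> supp g \<subseteq> S \<Longrightarrow> leps g = (\<Sum>n\<in>S. g n)"
  unfolding leps_def supp_def[symmetric]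
  by (rule sum.mono_neutral_left) (auto simp: supp_def)

lemma leps_add: "f \<in> finsupp \<Longrightarrow> g \<in> finsupp \<Longrightarrow> leps (f + g) = leps f + leps g"
proof -
  assume f: "f \<in> finsupp" and g: "g \<in> finsupp"
  let ?S = "supp f \<union> supp g"
  have fin: "finite ?S" using f g by (simp add: finsupp_iff)
  have s: "supp (f + g) \<subseteq> ?S" "supp f \<subseteq> ?S" "supp g \<subseteq> ?S" by (auto simp: supp_def fun_applys)
  show ?thesis
    by (simp add: leps_superset[OF fin s(1)] leps_superset[OF fin s(2)] leps_superset[OF fin s(3)]
        fun_applys sum.distrib)
qed

lemma leps_fsc: "f \<in> finsupp \<Longrightarrow> leps (fsc c f) = c * leps f"
proof -
  assume f: "f \<in> finsupp"
  have fin: "finite (supp f)" using f by (simp add: finsupp_iff)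
  have s: "supp (fsc c f) \<subseteq> supp f" by (auto simp: supp_def fsc_apply)
  show ?thesis
    by (simp add: leps_superset[OF fin s] leps_superset[OF fin order_refl] fsc_apply sum_distrib_left)
qed

lemma leps_pmon: "leps (pmon n) = 1"
  by (subst leps_superset[of "{n}"]) (auto simp: supp_def pmon_def)

lemma leps_zero: "leps 0 = 0" by (simp add: leps_def fun_applys)

lemma leps_act: "V \<in> finsupp \<Longrightarrow> leps (act V g) = weps [g] * leps V"
proof (induction rule: finsupp_induct)
  case zero then show ?case by (simp add: leps_zero)
next
  case (add n c V')
  have u: "Uc g n + Lc g n = weps [g]"
  proof -
    have bD: "B n = B' n + D n" by (simp add: D_def)
    show ?thesis using D0[of n] by (cases g) (simp_all add: weps_def bD field_simps)
  qed
  have a: "act (fsc c (pmon n) + V') g = fsc c (fsc (Uc g n) (pmon (n + 1)) + fsc (Lc g n) (pmon (n - 1))) + act V' g"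
    by (simp add: act_add act_fsc act_pmon)
  have "leps (act (fsc c (pmon n) + V') g) = c * (Uc g n + Lc g n) + leps (act V' g)"
    unfolding a using add(1)
    by (simp add: leps_add leps_fsc finsupp_add finsupp_fsc finsupp_act leps_pmon algebra_simps)
  also have "\<dots> = weps [g] * leps (fsc c (pmon n) + V')"
    using add by (simp add: u leps_add leps_fsc finsupp_fsc leps_pmon distrib_left mult.commute)
  finally show ?case .
qed

lemma counit_word: "leps (phi (wmon w)) = weps w"
proof (induction w rule: rev_induct)
  case Nil then show ?case by (simp add: phi_wmon v0_def leps_pmon weps_def)
next
  case (snoc g w)
  then show ?case by (simp add: phi_wmon actw_snoc leps_act finsupp_actw weps_append mult.commute)
qed

lemma counit_phi: "f \<in> finsupp \<Longrightarrow> leps (phi f) = feps f"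
proof (induction rule: finsupp_induct)
  case zero then show ?case by (simp add: flinear_zero[OF flinear_phi] leps_zero)
next
  case (add w c g)
  have f1: "fsc c (pmon w) \<in> finsupp" by auto
  have "phi (fsc c (pmon w) + g) = fsc c (phi (pmon w)) + phi g"
    using add(1) f1 by (simp add: flinear_add[OF flinear_phi] flinear_fsc[OF flinear_phi])
  then have "leps (phi (fsc c (pmon w) + g)) = c * leps (phi (pmon w)) + leps (phi g)"
    by (simp add: leps_add leps_fsc finsupp_fsc finsupp_phi)
  also have "\<dots> = feps (fsc c (pmon w) + g)"
    using add f1 by (simp add: feps_add feps_fsc counit_word[unfolded wmon_pmon] feps_wmon[unfolded wmon_pmon])
  finally show ?case .
qed

theorem laurent_iso: "coalg_iso_laurent (Jc q (\<beta> + \<beta>') (\<beta> * \<beta>'))"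
  unfolding coalg_iso_laurent_def
proof (intro exI[of _ phi] conjI ballI)
  show "flinear phi" by (rule flinear_phi)
  show "phi ` finsupp \<subseteq> finsupp" by auto
  show "finsupp \<subseteq> phi ` finsupp"
  proof
    fix v :: "int \<Rightarrow> complex" assume "v \<in> finsupp"
    then show "v \<in> phi ` finsupp" using phi_sec by (intro rev_image_eqI[of "sec v"]) auto
  qed
next
  fix f :: fa assume f: "f \<in> finsupp"
  show "phi f = 0 \<longleftrightarrow> f \<in> Jc q (\<beta> + \<beta>') (\<beta> * \<beta>')"
  proof
    assume "phi f = 0"
    then show "f \<in> Jc q (\<beta> + \<beta>') (\<beta> * \<beta>')" using main_span[OF f] by (simp add: Jl0)
  qed (rule phi_J)
  show "tmap phi phi (fcomult f) = lcomult (phi f)" by (rule coalg_phi[OF f])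
  show "leps (phi f) = feps f" by (rule counit_phi[OF f])
qed

end

lemma cis_powi: "cis \<phi> powi n = cis (of_int n * \<phi>)"
proof (cases "n \<ge> 0")
  case True
  then have "cis \<phi> powi n = cis \<phi> ^ nat n" by (simp add: power_int_def)
  also have "\<dots> = cis (real (nat n) * \<phi>)" by (rule DeMoivre)
  finally show ?thesis using True by simp
next
  case False
  then have "cis \<phi> powi n = inverse (cis \<phi>) ^ nat (- n)" by (simp add: power_int_def)
  also have "\<dots> = cis (real (nat (- n)) * (- \<phi>))" by (simp add: DeMoivre)
  finally show ?thesis using False by simp
qed

lemma cis_plus_minus: "cis x + cis (- x) = complex_of_real (2 * cos x)"
  by (simp add: complex_eq_iff)

lemma LB_cis: "LB (c * cis \<psi>) (cis \<phi>) n = c * cis (\<psi> - of_int n * \<phi>)"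
  by (simp add: LB_def cis_powi mult.assoc cis_mult)
lemma LB'_cis: "LB' (c * cis (- \<psi>)) (cis \<phi>) n = c * cis (- (\<psi> - of_int n * \<phi>))"
  by (simp add: LB'_def cis_powi mult.assoc cis_mult)

lemma part4_gen:
  assumes q: "q = cis \<phi>" and s: "s ^ 2 = q" and \<nu>: "\<nu> > 0"
    and \<mu>: "\<mu> = sqrt \<nu> * cos \<psi>" and \<mu>n: "\<mu>n = sqrt \<nu> * cos (\<psi> + of_int n * \<phi>)"
  shows "\<exists>F. coalg_iso_map (Jset q s \<mu> \<nu>) (Jset q s \<mu>n \<nu>) F \<and> rmod_map (Jset q s \<mu>n \<nu>) F"
proof -
  define c where "c = s * complex_of_real (sqrt \<nu>)"
  define \<beta> where "\<beta> = c * cis \<psi>"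
  define \<beta>' where "\<beta>' = c * cis (- \<psi>)"
  have q0: "q \<noteq> 0" using q by simp
  have cc: "c * c = q * complex_of_real \<nu>"
    using s \<nu> by (simp add: c_def power2_eq_square mult_ac of_real_mult[symmetric])
  have "\<beta> + \<beta>' = c * (cis \<psi> + cis (- \<psi>))" by (simp add: \<beta>_def \<beta>'_def distrib_left)
  then have sum: "\<beta> + \<beta>' = 2 * s * complex_of_real \<mu>"
    by (simp only: cis_plus_minus) (simp add: c_def \<mu> mult_ac)
  have prod: "\<beta> * \<beta>' = q * complex_of_real \<nu>"
    by (simp add: \<beta>_def \<beta>'_def mult_ac cis_mult) (use cc in \<open>simp add: mult.assoc[symmetric]\<close>)
  obtain F where F: "coalg_iso_map (Jc q (\<beta> + \<beta>') (\<beta> * \<beta>')) (Jc q (LB \<beta> q (- n) + LB' \<beta>' q (- n)) (\<beta> * \<beta>')) F"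
    "rmod_map (Jc q (LB \<beta> q (- n) + LB' \<beta>' q (- n)) (\<beta> * \<beta>')) F"
    using level_chain[OF q0, of \<beta> \<beta>' "- n"] by blast
  have "LB \<beta> q (- n) + LB' \<beta>' q (- n) = c * (cis (\<psi> + of_int n * \<phi>) + cis (- (\<psi> + of_int n * \<phi>)))"
    unfolding \<beta>_def \<beta>'_def q LB_cis LB'_cis by (simp add: distrib_left)
  also have "\<dots> = 2 * s * complex_of_real \<mu>n"
    by (simp only: cis_plus_minus) (simp add: c_def \<mu>n mult_ac)
  finally have lv: "LB \<beta> q (- n) + LB' \<beta>' q (- n) = 2 * s * complex_of_real \<mu>n" .
  show ?thesis using F unfolding Jset_Jc lv sum prod by blast
qed

lemma not_root_cis:
  assumes nr: "\<forall>n::nat. n > 0 \<longrightarrow> q ^ n \<noteq> 1" and q: "q = cis \<phi>"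
  shows "cis (of_int k * \<phi>) = 1 \<Longrightarrow> k = 0"
proof (rule ccontr)
  assume h: "cis (of_int k * \<phi>) = 1" and k: "k \<noteq> 0"
  have "cis (of_int \<bar>k\<bar> * \<phi>) = 1"
  proof (cases "k \<ge> 0")
    case True then show ?thesis using h by simp
  next
    case False
    then have "cis (of_int \<bar>k\<bar> * \<phi>) = inverse (cis (of_int k * \<phi>))" by simp
    then show ?thesis using h by simp
  qed
  moreover have "q ^ nat \<bar>k\<bar> = cis (real (nat \<bar>k\<bar>) * \<phi>)" by (simp add: q DeMoivre)
  ultimately have "q ^ nat \<bar>k\<bar> = 1" by simp
  moreover have "nat \<bar>k\<bar> > 0" using k by simp
  ultimately show False using nr by blast
qed

lemma part1:
  assumes q: "q = cis \<phi>" and nr: "\<forall>n::nat. n > 0 \<longrightarrow> q ^ n \<noteq> 1" and s: "s ^ 2 = q"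
    and h: "\<mu>\<^sup>2 > \<nu>"
  shows "coalg_iso_laurent (Jset q s \<mu> \<nu>)"
proof -
  define r where "r = sqrt (\<mu>\<^sup>2 - \<nu>)"
  have r0: "r > 0" using h by (simp add: r_def)
  have r2: "r\<^sup>2 = \<mu>\<^sup>2 - \<nu>" using h by (simp add: r_def)
  define \<beta> where "\<beta> = s * complex_of_real (\<mu> + r)"
  define \<beta>' where "\<beta>' = s * complex_of_real (\<mu> - r)"
  have q0: "q \<noteq> 0" using q by simp
  have s0: "s \<noteq> 0" using s q0 by auto
  have sum: "\<beta> + \<beta>' = 2 * s * complex_of_real \<mu>"
    by (simp add: \<beta>_def \<beta>'_def algebra_simps)
  have "\<beta> * \<beta>' = s^2 * complex_of_real ((\<mu> + r) * (\<mu> - r))"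
    by (simp add: \<beta>_def \<beta>'_def power2_eq_square mult_ac)
  also have "(\<mu> + r) * (\<mu> - r) = \<nu>" using r2 by (simp add: algebra_simps power2_eq_square)
  finally have prod: "\<beta> * \<beta>' = q * complex_of_real \<nu>" using s by simp
  have ne: "LB \<beta> q n \<noteq> LB' \<beta>' q n" for n
  proof
    assume eq: "LB \<beta> q n = LB' \<beta>' q n"
    have e2: "s * complex_of_real (\<mu> + r) * cis (- (of_int n * \<phi>)) = s * complex_of_real (\<mu> - r) * cis (of_int n * \<phi>)"
      using eq by (simp add: LB_def LB'_def \<beta>_def \<beta>'_def q cis_powi)
    then have "norm (s * complex_of_real (\<mu> + r) * cis (- (of_int n * \<phi>))) = norm (s * complex_of_real (\<mu> - r) * cis (of_int n * \<phi>))"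
      by (rule arg_cong)
    then have "norm s * \<bar>\<mu> + r\<bar> = norm s * \<bar>\<mu> - r\<bar>"
      by (simp only: norm_mult norm_of_real norm_cis mult_1_right)
    then have "\<bar>\<mu> + r\<bar> = \<bar>\<mu> - r\<bar>" using s0 by simp
    then have "\<bar>\<mu> + r\<bar>\<^sup>2 = \<bar>\<mu> - r\<bar>\<^sup>2" by simp
    then have "(\<mu> + r)\<^sup>2 = (\<mu> - r)\<^sup>2" by (simp only: power2_abs)
    then have "\<mu> * r = 0" by (simp add: power2_eq_square algebra_simps)
    then have "\<mu> = 0" using r0 by simp
    then have "s * (complex_of_real r * cis (- (of_int n * \<phi>))) = s * (- (complex_of_real r * cis (of_int n * \<phi>)))"
      using e2 by (simp add: mult.assoc)
    then have "complex_of_real r * cis (- (of_int n * \<phi>)) = - (complex_of_real r * cis (of_int n * \<phi>))"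
      using mult_left_cancel[OF s0] by blast
    then have "complex_of_real r * cis (- (of_int n * \<phi>)) = complex_of_real r * (- cis (of_int n * \<phi>))"
      by (simp only: mult_minus_right)
    moreover have "complex_of_real r \<noteq> 0" using r0 by simp
    ultimately have "cis (- (of_int n * \<phi>)) = - cis (of_int n * \<phi>)" using mult_left_cancel by blast
    have m1: "cis (of_int (2 * n) * \<phi>) = - 1"
    proof -
      from \<open>cis (- (of_int n * \<phi>)) = - cis (of_int n * \<phi>)\<close>
      have "cis (- (of_int n * \<phi>)) * cis (of_int n * \<phi>) = - (cis (of_int n * \<phi>) * cis (of_int n * \<phi>))" by simp
      then have "- cis (of_int (2 * n) * \<phi>) = 1" by (simp add: cis_mult algebra_simps)
      then show ?thesis by (simp add: minus_equation_iff[of "cis _"])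
    qed
    have "cis (of_int (4 * n) * \<phi>) = 1"
    proof -
      have "cis (of_int (4 * n) * \<phi>) = cis (of_int (2 * n) * \<phi>) * cis (of_int (2 * n) * \<phi>)"
        by (simp add: cis_mult algebra_simps)
      then show ?thesis using m1 by simp
    qed
    then have "4 * n = 0" by (rule not_root_cis[OF nr q])
    then have "n = 0" by simp
    then show False using m1 by simp
  qed
  interpret laur q \<beta> \<beta>' using q0 ne by unfold_locales auto
  show ?thesis using laurent_iso unfolding Jset_Jc sum prod .
qed

lemma sin_sum_diff: fixes a b :: real shows "sin (a + b) * sin (a - b) = (cos b)\<^sup>2 - (cos a)\<^sup>2"
proof -
  have "sin (a + b) * sin (a - b) = (sin a * cos b)\<^sup>2 - (cos a * sin b)\<^sup>2"
    unfolding sin_add sin_diff by (simp add: power2_eq_square algebra_simps)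
  also have "\<dots> = (sin a)\<^sup>2 * (cos b)\<^sup>2 - (cos a)\<^sup>2 * (sin b)\<^sup>2" by (simp add: power_mult_distrib)
  also have "\<dots> = (cos b)\<^sup>2 - (cos a)\<^sup>2" by (simp add: sin_squared_eq algebra_simps)
  finally show ?thesis .
qed

lemma part2:
  assumes q: "q = cis \<phi>" and s: "s ^ 2 = q" and \<nu>: "\<nu> > 0" and \<mu>: "\<mu> / sqrt \<nu> = cos \<psi>"
    and nsp: "\<forall>l::int. (cos \<psi>)\<^sup>2 \<noteq> (cos (of_int l * \<phi>))\<^sup>2"
  shows "coalg_iso_laurent (Jset q s \<mu> \<nu>)"
proof -
  have \<mu>': "\<mu> = sqrt \<nu> * cos \<psi>" using \<mu> \<nu> by (simp add: field_simps)
  define c where "c = s * complex_of_real (sqrt \<nu>)"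
  define \<beta> where "\<beta> = c * cis \<psi>"
  define \<beta>' where "\<beta>' = c * cis (- \<psi>)"
  have q0: "q \<noteq> 0" using q by simp
  have s0: "s \<noteq> 0" using s q0 by auto
  have c0: "c \<noteq> 0" using s0 \<nu> by (simp add: c_def)
  have cc: "c * c = q * complex_of_real \<nu>"
    using s \<nu> by (simp add: c_def power2_eq_square mult_ac of_real_mult[symmetric])
  have "\<beta> + \<beta>' = c * (cis \<psi> + cis (- \<psi>))" by (simp add: \<beta>_def \<beta>'_def distrib_left)
  then have sum: "\<beta> + \<beta>' = 2 * s * complex_of_real \<mu>"
    by (simp only: cis_plus_minus) (simp add: c_def \<mu>' mult_ac)
  have prod: "\<beta> * \<beta>' = q * complex_of_real \<nu>"
    by (simp add: \<beta>_def \<beta>'_def mult_ac cis_mult) (use cc in \<open>simp add: mult.assoc[symmetric]\<close>)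
  have ne: "LB \<beta> q n \<noteq> LB' \<beta>' q n" for n
  proof
    assume "LB \<beta> q n = LB' \<beta>' q n"
    then have "c * cis (\<psi> - of_int n * \<phi>) = c * cis (- (\<psi> - of_int n * \<phi>))"
      unfolding \<beta>_def \<beta>'_def q LB_cis LB'_cis .
    then have "cis (\<psi> - of_int n * \<phi>) = cis (- (\<psi> - of_int n * \<phi>))" using c0 by simp
    then have "Im (cis (\<psi> - of_int n * \<phi>)) = Im (cis (- (\<psi> - of_int n * \<phi>)))" by (rule arg_cong)
    moreover have "Im (cis (\<psi> - of_int n * \<phi>)) = sin (\<psi> - of_int n * \<phi>)"
      "Im (cis (- (\<psi> - of_int n * \<phi>))) = - sin (\<psi> - of_int n * \<phi>)" by (simp_all only: cis.simps sin_minus)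
    ultimately have "sin (\<psi> - of_int n * \<phi>) = 0" by simp
    then have "(cos (of_int n * \<phi>))\<^sup>2 - (cos \<psi>)\<^sup>2 = 0" using sin_sum_diff[of \<psi> "of_int n * \<phi>"] by simp
    then show False using nsp[rule_format, of n] by simp
  qed
  interpret laur q \<beta> \<beta>' using q0 ne by unfold_locales auto
  show ?thesis using laurent_iso unfolding Jset_Jc sum prod .
qed

lemma special_to_base:
  assumes q: "q = cis \<phi>" and s: "s ^ 2 = q" and \<nu>: "\<nu> > 0" and \<mu>: "\<mu> = sqrt \<nu> * cos \<psi>"
    and sp: "(cos \<psi>)\<^sup>2 = (cos (of_int l * \<phi>))\<^sup>2"
  shows "\<exists>\<epsilon>. (\<epsilon> = 1 \<or> \<epsilon> = -1) \<and> (\<exists>F. coalg_iso_map (Jset q s \<mu> \<nu>) (Jset q s (\<epsilon> * sqrt \<nu>) \<nu>) F)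
           \<and> (\<exists>G. coalg_iso_map (Jset q s (\<epsilon> * sqrt \<nu>) \<nu>) (Jset q s \<mu> \<nu>) G)"
proof -
  have "cos \<psi> = cos (of_int l * \<phi>) \<or> cos \<psi> = - cos (of_int l * \<phi>)"
    using sp by (simp add: power2_eq_iff)
  then show ?thesis
  proof
    assume c: "cos \<psi> = cos (of_int l * \<phi>)"
    obtain F where F: "coalg_iso_map (Jset q s \<mu> \<nu>) (Jset q s (1 * sqrt \<nu>) \<nu>) F"
      using part4_gen[OF q s \<nu>, of \<mu> "of_int l * \<phi>" "1 * sqrt \<nu>" "- l"] \<mu> c by auto
    obtain G where G: "coalg_iso_map (Jset q s (1 * sqrt \<nu>) \<nu>) (Jset q s \<mu> \<nu>) G"
      using part4_gen[OF q s \<nu>, of "1 * sqrt \<nu>" 0 \<mu> l] \<mu> c by auto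
    show ?thesis using F G by blast
  next
    assume c: "cos \<psi> = - cos (of_int l * \<phi>)"
    have c1: "cos (of_int l * \<phi> + pi) = - cos (of_int l * \<phi>)" by simp
    have c2: "cos (pi + of_int l * \<phi>) = - cos (of_int l * \<phi>)" by simp
    obtain F where F: "coalg_iso_map (Jset q s \<mu> \<nu>) (Jset q s (-1 * sqrt \<nu>) \<nu>) F"
    proof -
      have "cos (of_int l * \<phi> + pi + of_int (- l) * \<phi>) = -1" by simp
      then show ?thesis using part4_gen[OF q s \<nu>, of \<mu> "of_int l * \<phi> + pi" "-1 * sqrt \<nu>" "- l"] \<mu> c c1 that
        by auto
    qed
    obtain G where G: "coalg_iso_map (Jset q s (-1 * sqrt \<nu>) \<nu>) (Jset q s \<mu> \<nu>) G"
      using part4_gen[OF q s \<nu>, of "-1 * sqrt \<nu>" pi \<mu> l] \<mu> c c2 by auto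
    show ?thesis using F G by blast
  qed
qed

lemma scal_base:
  assumes \<nu>: "\<nu> > 0" and \<nu>': "\<nu>' > 0" and e: "\<epsilon> = 1 \<or> \<epsilon> = -1" and e': "\<epsilon>' = 1 \<or> \<epsilon>' = -1"
  shows "\<exists>F. coalg_iso_map (Jset q s (\<epsilon> * sqrt \<nu>) \<nu>) (Jset q s (\<epsilon>' * sqrt \<nu>') \<nu>') F"
proof -
  define t where "t = \<epsilon> * \<epsilon>' * sqrt \<nu>' / sqrt \<nu>"
  have ee: "\<epsilon> * \<epsilon> = 1" using e by auto
  have ee': "\<epsilon>' * \<epsilon>' = 1" using e' by auto
  have sn: "sqrt \<nu> \<noteq> 0" "sqrt \<nu>' \<noteq> 0" using \<nu> \<nu>' by simp_all
  have en: "\<epsilon> \<noteq> 0" "\<epsilon>' \<noteq> 0" using e e' by auto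
  have t0: "t \<noteq> 0" unfolding t_def using sn en by simp
  have r1: "\<epsilon> * sqrt \<nu> * t = \<epsilon>' * sqrt \<nu>'"
  proof -
    have "\<epsilon> * sqrt \<nu> * t = (\<epsilon> * \<epsilon>) * \<epsilon>' * sqrt \<nu>' * (sqrt \<nu> / sqrt \<nu>)"
      unfolding t_def by (simp only: times_divide_eq_right times_divide_eq_left mult_ac)
    also have "\<dots> = \<epsilon>' * sqrt \<nu>'" using sn by (simp only: ee divide_self_if if_False mult_1_left mult_1_right)
    finally show ?thesis .
  qed
  have r2: "\<nu> * t^2 = \<nu>'"
  proof -
    have "\<nu> * t^2 = \<nu> * ((\<epsilon> * \<epsilon>) * (\<epsilon>' * \<epsilon>') * (sqrt \<nu>' * sqrt \<nu>') / (sqrt \<nu> * sqrt \<nu>))"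
      unfolding t_def by (simp only: power2_eq_square times_divide_eq_right times_divide_eq_left divide_divide_eq_left mult_ac)
    also have "\<dots> = \<nu> * (\<nu>' / \<nu>)" using \<nu> \<nu>' by (simp only: ee ee' mult_1_left real_sqrt_mult_self)
    also have "\<dots> = \<nu>'" using \<nu> by simp
    finally show ?thesis .
  qed
  have iso: "coalg_iso_map (Jc q (2 * s * complex_of_real (\<epsilon> * sqrt \<nu>)) (q * complex_of_real \<nu>))
     (Jc q (2 * s * complex_of_real (\<epsilon> * sqrt \<nu>) * complex_of_real t) (q * complex_of_real \<nu> * (complex_of_real t)^2))
     (scal (complex_of_real t))"
    by (rule scal_iso) (use t0 in simp)
  have e1: "2 * s * complex_of_real (\<epsilon> * sqrt \<nu>) * complex_of_real t = 2 * s * complex_of_real (\<epsilon>' * sqrt \<nu>')"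
    using r1 by (simp only: mult.assoc of_real_mult[symmetric])
  have e2: "q * complex_of_real \<nu> * (complex_of_real t)^2 = q * complex_of_real \<nu>'"
    by (simp only: mult.assoc of_real_power[symmetric] of_real_mult[symmetric] r2)
  show ?thesis unfolding Jset_Jc using iso unfolding e1 e2 by blast
qed

lemma Jset_Jc': "Jset q s \<mu> \<nu> = Jc q (2 * s * complex_of_real \<mu>) (q * complex_of_real \<nu>)" by (rule Jset_Jc)

lemma iso_comp_J:
  "coalg_iso_map (Jset q s \<mu>1 \<nu>1) (Jset q s \<mu>2 \<nu>2) F \<Longrightarrow> coalg_iso_map (Jset q s \<mu>2 \<nu>2) (Jset q s \<mu>3 \<nu>3) G
   \<Longrightarrow> coalg_iso_map (Jset q s \<mu>1 \<nu>1) (Jset q s \<mu>3 \<nu>3) (\<lambda>f. G (F f))"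
  unfolding Jset_Jc by (rule iso_comp)

lemma part3:
  assumes q: "q = cis \<phi>" and s: "s ^ 2 = q"
    and \<nu>: "\<nu> > 0" and \<mu>: "\<mu> / sqrt \<nu> = cos \<psi>" and l: "\<exists>l::int. (cos \<psi>)\<^sup>2 = (cos (of_int l * \<phi>))\<^sup>2"
    and \<nu>': "\<nu>' > 0" and \<mu>': "\<mu>' / sqrt \<nu>' = cos \<psi>'" and l': "\<exists>l::int. (cos \<psi>')\<^sup>2 = (cos (of_int l * \<phi>))\<^sup>2"
  shows "\<exists>F. coalg_iso_map (Jset q s \<mu> \<nu>) (Jset q s \<mu>' \<nu>') F"
proof -
  have m1: "\<mu> = sqrt \<nu> * cos \<psi>" using \<mu> \<nu> by (simp add: field_simps)
  have m2: "\<mu>' = sqrt \<nu>' * cos \<psi>'" using \<mu>' \<nu>' by (simp add: field_simps)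
  obtain l1 where l1: "(cos \<psi>)\<^sup>2 = (cos (of_int l1 * \<phi>))\<^sup>2" using l by blast
  obtain l2 where l2: "(cos \<psi>')\<^sup>2 = (cos (of_int l2 * \<phi>))\<^sup>2" using l' by blast
  obtain \<epsilon> F1 where e: "\<epsilon> = 1 \<or> \<epsilon> = -1" and F1: "coalg_iso_map (Jset q s \<mu> \<nu>) (Jset q s (\<epsilon> * sqrt \<nu>) \<nu>) F1"
    using special_to_base[OF q s \<nu> m1 l1] by blast
  obtain \<epsilon>' G where e': "\<epsilon>' = 1 \<or> \<epsilon>' = -1" and G: "coalg_iso_map (Jset q s (\<epsilon>' * sqrt \<nu>') \<nu>') (Jset q s \<mu>' \<nu>') G"
    using special_to_base[OF q s \<nu>' m2 l2] by blast
  obtain F2 where F2: "coalg_iso_map (Jset q s (\<epsilon> * sqrt \<nu>) \<nu>) (Jset q s (\<epsilon>' * sqrt \<nu>') \<nu>') F2"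
    using scal_base[OF \<nu> \<nu>' e e'] by blast
  show ?thesis using iso_comp_J[OF iso_comp_J[OF F1 F2] G] by blast
qed

theorem proposition6:
  fixes q s :: complex and \<phi> :: real
  assumes q_def: "q = exp (\<i> * complex_of_real \<phi>)"
    and not_root: "\<forall>n::nat. n > 0 \<longrightarrow> q ^ n \<noteq> 1"
    and sqrt_q: "s ^ 2 = q"
  shows
    "(\<forall>\<mu> \<nu> :: real. \<mu>\<^sup>2 > \<nu> \<longrightarrow> coalg_iso_laurent (Jset q s \<mu> \<nu>))
   \<and> (\<forall>\<mu> \<nu> \<psi> :: real. \<nu> > 0 \<and> \<mu> / sqrt \<nu> = cos \<psi> \<and> cos \<psi> < 1
        \<and> (\<forall>l::int. (cos \<psi>)\<^sup>2 \<noteq> (cos (of_int l * \<phi>))\<^sup>2)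
        \<longrightarrow> coalg_iso_laurent (Jset q s \<mu> \<nu>))
   \<and> (\<forall>\<mu> \<nu> \<psi> \<mu>' \<nu>' \<psi>' :: real.
        \<nu> > 0 \<and> \<mu> / sqrt \<nu> = cos \<psi> \<and> (\<exists>l::int. (cos \<psi>)\<^sup>2 = (cos (of_int l * \<phi>))\<^sup>2)
      \<and> \<nu>' > 0 \<and> \<mu>' / sqrt \<nu>' = cos \<psi>' \<and> (\<exists>l::int. (cos \<psi>')\<^sup>2 = (cos (of_int l * \<phi>))\<^sup>2)
        \<longrightarrow> (\<exists>F. coalg_iso_map (Jset q s \<mu> \<nu>) (Jset q s \<mu>' \<nu>') F))
   \<and> (\<forall>\<mu> \<nu> \<psi> \<mu>n :: real. \<forall>n::int.
        \<nu> > 0 \<and> \<mu> / sqrt \<nu> = cos \<psi> \<and> cos \<psi> \<le> 1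
      \<and> \<mu>n / sqrt \<nu> = cos (\<psi> + of_int n * \<phi>)
        \<longrightarrow> (\<exists>F. coalg_iso_map (Jset q s \<mu> \<nu>) (Jset q s \<mu>n \<nu>) F
                 \<and> rmod_map (Jset q s \<mu>n \<nu>) F))"
proof -
  have q: "q = cis \<phi>" using q_def by (simp add: cis_conv_exp)
  have A: "\<forall>\<mu> \<nu> :: real. \<mu>\<^sup>2 > \<nu> \<longrightarrow> coalg_iso_laurent (Jset q s \<mu> \<nu>)"
    using part1[OF q not_root sqrt_q] by blast
  have B: "\<forall>\<mu> \<nu> \<psi> :: real. \<nu> > 0 \<and> \<mu> / sqrt \<nu> = cos \<psi> \<and> cos \<psi> < 1
        \<and> (\<forall>l::int. (cos \<psi>)\<^sup>2 \<noteq> (cos (of_int l * \<phi>))\<^sup>2)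
        \<longrightarrow> coalg_iso_laurent (Jset q s \<mu> \<nu>)"
    using part2[OF q sqrt_q] by blast
  have C: "\<forall>\<mu> \<nu> \<psi> \<mu>' \<nu>' \<psi>' :: real.
        \<nu> > 0 \<and> \<mu> / sqrt \<nu> = cos \<psi> \<and> (\<exists>l::int. (cos \<psi>)\<^sup>2 = (cos (of_int l * \<phi>))\<^sup>2)
      \<and> \<nu>' > 0 \<and> \<mu>' / sqrt \<nu>' = cos \<psi>' \<and> (\<exists>l::int. (cos \<psi>')\<^sup>2 = (cos (of_int l * \<phi>))\<^sup>2)
        \<longrightarrow> (\<exists>F. coalg_iso_map (Jset q s \<mu> \<nu>) (Jset q s \<mu>' \<nu>') F)"
    using part3[OF q sqrt_q] by blast
  have D: "\<forall>\<mu> \<nu> \<psi> \<mu>n :: real. \<forall>n::int.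
        \<nu> > 0 \<and> \<mu> / sqrt \<nu> = cos \<psi> \<and> cos \<psi> \<le> 1
      \<and> \<mu>n / sqrt \<nu> = cos (\<psi> + of_int n * \<phi>)
        \<longrightarrow> (\<exists>F. coalg_iso_map (Jset q s \<mu> \<nu>) (Jset q s \<mu>n \<nu>) F
                 \<and> rmod_map (Jset q s \<mu>n \<nu>) F)"
  proof (intro allI impI)
    fix \<mu> \<nu> \<psi> \<mu>n :: real and n :: int
    assume h: "\<nu> > 0 \<and> \<mu> / sqrt \<nu> = cos \<psi> \<and> cos \<psi> \<le> 1 \<and> \<mu>n / sqrt \<nu> = cos (\<psi> + of_int n * \<phi>)"
    then have \<nu>: "\<nu> > 0" and m1: "\<mu> = sqrt \<nu> * cos \<psi>" and m2: "\<mu>n = sqrt \<nu> * cos (\<psi> + of_int n * \<phi>)"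
      by (auto simp: field_simps)
    show "\<exists>F. coalg_iso_map (Jset q s \<mu> \<nu>) (Jset q s \<mu>n \<nu>) F \<and> rmod_map (Jset q s \<mu>n \<nu>) F"
      by (rule part4_gen[OF q sqrt_q \<nu> m1 m2])
  qed
  show ?thesis using A B C D by blast
qed

end
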